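(* Let $Q$ be a finite $n$-nicely-graded bound quiver. Then there is a sequence $Q(0)=Q,Q(1),\dots,Q(t),\dots$ of nicely-graded bound quivers such that for every $t\ge0$: (1) $Q(t+1)=\widehat{Q(t)}$ is the multi-layer quiver of $Q(t)$; (2) $Q(t)$ is an $(n+t)$-nicely-graded quiver.
   Context: $k$ is a field. Bound quivers have relations that are linear combinations of paths of equal length $\ge2$ with common source and target; paths composed right to left; $s(p),t(p),l(p)$ are source, target, length; bound paths are nonzero in $\Lambda=kQ/(\rho)$. $Q$ is $m$-properly-graded if all maximal bound paths have length $m$; nicely-graded if there is $u:Q_0\to\mathbb Z$ with $u(j)=u(i)+1$ for each arrow $i\to j$ (equivalently every cyclic walk has zero grade); $m$-nicely-graded if both. Multi-layer quiver of a finite $m$-nicely-graded $Q$ (with a fixed basis $\mathcal M$ of $\Lambda_m$ of images of maximal bound paths, dual functionals $f^*\in D\Lambda$ vanishing off degree $m$, $D\Lambda$ a bimodule via $(a\varphi b)(x)=\varphi(bxa)$, and $\rho_{\mathcal M}$ the set of combinations $\sum_fc_fx_f\beta_fy_f$ of paths with $\sum_f c_fx_ff^*y_f=0$): vertices $(i,r)$, $i\in Q_0$, $0\le r\le m+1$; arrows $\alpha^{[r]}:(i,r)\to(j,r)$ for arrows $\alpha:i\to j$; $\gamma_i^{[r]}:(i,r)\to(i,r+1)$, $0\le r\le m$; $\beta_p:(t(p),0)\to(s(p),m+1)$, $p\in\mathcal M$. Relations: copies of $\rho$ on each floor; $\gamma_i^{[r+1]}\gamma_i^{[r]}$ ($0\le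 r\le m-1$); $\alpha^{[r+1]}\gamma_i^{[r]}-\gamma_j^{[r]}\alpha^{[r]}$ ($0\le r\le m$); $\sum_fc_fx_f^{[m+1]}\beta_fy_f^{[0]}$ for elements of $\rho_{\mathcal M}$. *)

theory Defs
  imports Main
begin

text \<open>A path is a pair (source vertex, list of arrows); the list is read as the
written composite, i.e. right to left: (s, [a_k, ..., a_1]) is a_k ... a_1 starting
at s. An element of the path algebra kQ is a
function from paths to k (finitely supported, supported on valid paths).\<close>

record ('V, 'A, 'k) bquiver =
  verts :: "'V set"
  arrs  :: "'A set"
  src   :: "'A \<Rightarrow> 'V"
  tgt   :: "'A \<Rightarrow> 'V"
  rels  :: "(('V \<times> 'A list) \<Rightarrow> 'k) set"

definition is_path :: "('V,'A,'k) bquiver \<Rightarrow> 'V \<times> 'A list \<Rightarrow> bool" where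
  "is_path Q p \<longleftrightarrow> fst p \<in> verts Q \<and> set (snd p) \<subseteq> arrs Q
     \<and> (\<forall>i. Suc i < length (snd p) \<longrightarrow> src Q (snd p ! i) = tgt Q (snd p ! Suc i))
     \<and> (snd p \<noteq> [] \<longrightarrow> src Q (last (snd p)) = fst p)"

definition ptgt :: "('V,'A,'k) bquiver \<Rightarrow> 'V \<times> 'A list \<Rightarrow> 'V" where
  "ptgt Q p = (if snd p = [] then fst p else tgt Q (hd (snd p)))"

definition plen :: "'V \<times> 'A list \<Rightarrow> nat" where
  "plen p = length (snd p)"

text \<open>pcomp q p = q p (first p, then q); meaningful when ptgt p = fst q.\<close>
definition pcomp :: "'V \<times> 'A list \<Rightarrow> 'V \<times> 'A list \<Rightarrow> 'V \<times> 'A list" where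
  "pcomp q p = (fst p, snd q @ snd p)"

definition ebasis :: "'P \<Rightarrow> 'P \<Rightarrow> 'k::field" where
  "ebasis p = (\<lambda>z. if z = p then 1 else 0)"

text \<open>x * a * y for paths x, y and an element a of kQ.\<close>
definition mul3 :: "('V,'A,'k::field) bquiver \<Rightarrow> 'V \<times> 'A list \<Rightarrow> ('V \<times> 'A list \<Rightarrow> 'k)
    \<Rightarrow> 'V \<times> 'A list \<Rightarrow> ('V \<times> 'A list \<Rightarrow> 'k)" where
  "mul3 Q x a y = (\<lambda>z. \<Sum>w \<in> {w. a w \<noteq> 0 \<and> fst w = ptgt Q y \<and> ptgt Q w = fst x
                                  \<and> pcomp x (pcomp w y) = z}. a w)"

inductive_set ideal_of :: "('V,'A,'k::field) bquiver \<Rightarrow> ('V \<times> 'A list \<Rightarrow> 'k) set"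
  for Q :: "('V,'A,'k) bquiver" where
  zero: "(\<lambda>_. 0) \<in> ideal_of Q"
| gen: "r \<in> rels Q \<Longrightarrow> is_path Q x \<Longrightarrow> is_path Q y \<Longrightarrow> mul3 Q x r y \<in> ideal_of Q"
| add: "a \<in> ideal_of Q \<Longrightarrow> b \<in> ideal_of Q \<Longrightarrow> (\<lambda>z. a z + b z) \<in> ideal_of Q"
| smult: "a \<in> ideal_of Q \<Longrightarrow> (\<lambda>z. c * a z) \<in> ideal_of Q"

definition bound_path :: "('V,'A,'k::field) bquiver \<Rightarrow> 'V \<times> 'A list \<Rightarrow> bool" where
  "bound_path Q p \<longleftrightarrow> is_path Q p \<and> ebasis p \<notin> ideal_of Q"

definition maximal_bound_path :: "('V,'A,'k::field) bquiver \<Rightarrow> 'V \<times> 'A list \<Rightarrow> bool" where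
  "maximal_bound_path Q p \<longleftrightarrow> bound_path Q p \<and>
     (\<forall>\<alpha>\<in>arrs Q.
        (src Q \<alpha> = ptgt Q p \<longrightarrow> \<not> bound_path Q (fst p, \<alpha> # snd p)) \<and>
        (tgt Q \<alpha> = fst p \<longrightarrow> \<not> bound_path Q (src Q \<alpha>, snd p @ [\<alpha>])))"

definition is_relation :: "('V,'A,'k::field) bquiver \<Rightarrow> ('V \<times> 'A list \<Rightarrow> 'k) \<Rightarrow> bool" where
  "is_relation Q r \<longleftrightarrow> finite {w. r w \<noteq> 0}
     \<and> (\<forall>w. r w \<noteq> 0 \<longrightarrow> is_path Q w \<and> plen w \<ge> 2)
     \<and> (\<forall>w w'. r w \<noteq> 0 \<longrightarrow> r w' \<noteq> 0 \<longrightarrow>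
           fst w = fst w' \<and> ptgt Q w = ptgt Q w' \<and> plen w = plen w')"

definition bound_quiver :: "('V,'A,'k::field) bquiver \<Rightarrow> bool" where
  "bound_quiver Q \<longleftrightarrow> (\<forall>\<alpha>\<in>arrs Q. src Q \<alpha> \<in> verts Q \<and> tgt Q \<alpha> \<in> verts Q)
     \<and> (\<forall>r\<in>rels Q. is_relation Q r)"

definition finite_bq :: "('V,'A,'k) bquiver \<Rightarrow> bool" where
  "finite_bq Q \<longleftrightarrow> finite (verts Q) \<and> finite (arrs Q)"

definition properly_graded :: "nat \<Rightarrow> ('V,'A,'k::field) bquiver \<Rightarrow> bool" where
  "properly_graded m Q \<longleftrightarrow> (\<forall>p. maximal_bound_path Q p \<longrightarrow> plen p = m)"

definition nicely_graded :: "('V,'A,'k::field) bquiver \<Rightarrow> bool" where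
  "nicely_graded Q \<longleftrightarrow> bound_quiver Q \<and>
     (\<exists>u :: 'V \<Rightarrow> int. \<forall>\<alpha>\<in>arrs Q. u (tgt Q \<alpha>) = u (src Q \<alpha>) + 1)"

definition m_nicely_graded :: "nat \<Rightarrow> ('V,'A,'k::field) bquiver \<Rightarrow> bool" where
  "m_nicely_graded m Q \<longleftrightarrow> nicely_graded Q \<and> properly_graded m Q"

definition lincomb :: "'P set \<Rightarrow> ('P \<Rightarrow> 'k::field) \<Rightarrow> 'P \<Rightarrow> 'k" where
  "lincomb M c = (\<lambda>z. \<Sum>p\<in>M. c p * ebasis p z)"

text \<open>M is a set of maximal bound paths whose images form a basis of Lambda_m
(the span of the images of the paths of length m).\<close>
definition is_mbasis :: "('V,'A,'k::field) bquiver \<Rightarrow> nat \<Rightarrow> ('V \<times> 'A list) set \<Rightarrow> bool" where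
  "is_mbasis Q m M \<longleftrightarrow> finite M \<and> (\<forall>p\<in>M. maximal_bound_path Q p \<and> plen p = m)
     \<and> (\<forall>c. lincomb M c \<in> ideal_of Q \<longrightarrow> (\<forall>p\<in>M. c p = 0))
     \<and> (\<forall>q. is_path Q q \<and> plen q = m \<longrightarrow>
           (\<exists>c. (\<lambda>z. ebasis q z - lincomb M c z) \<in> ideal_of Q))"

definition dualf :: "('V,'A,'k::field) bquiver \<Rightarrow> nat \<Rightarrow> ('V \<times> 'A list) set
     \<Rightarrow> 'V \<times> 'A list \<Rightarrow> 'V \<times> 'A list \<Rightarrow> 'k" where
  "dualf Q m M p w = (if is_path Q w \<and> plen w = m then
     (THE c. (\<forall>q. q \<notin> M \<longrightarrow> c q = 0) \<and>
             (\<lambda>z. ebasis w z - lincomb M c z) \<in> ideal_of Q) p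
   else 0)"

text \<open>(x p^* y)(z) = p^*(y z x), which is 0 if y z x is not composable.\<close>
definition dual_act :: "('V,'A,'k::field) bquiver \<Rightarrow> nat \<Rightarrow> ('V \<times> 'A list) set
     \<Rightarrow> 'V \<times> 'A list \<Rightarrow> 'V \<times> 'A list \<Rightarrow> 'V \<times> 'A list \<Rightarrow> 'V \<times> 'A list \<Rightarrow> 'k" where
  "dual_act Q m M x p y z = (if ptgt Q x = fst z \<and> ptgt Q z = fst y
      then dualf Q m M p (pcomp y (pcomp z x)) else 0)"

text \<open>A universe of vertices/arrows closed under the multi-layer construction.\<close>
datatype 'v vert = BaseV 'v | Lay "'v vert" nat
datatype ('v, 'a) arr = BaseA 'a | ACopy "('v, 'a) arr" nat | Gam "'v vert" nat
  | Beta "'v vert" "('v, 'a) arr list"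

type_synonym ('v, 'a, 'k) uquiver = "('v vert, ('v, 'a) arr, 'k) bquiver"

fun msrc :: "('v,'a,'k) uquiver \<Rightarrow> ('v,'a) arr \<Rightarrow> 'v vert" where
  "msrc Q (ACopy \<alpha> r) = Lay (src Q \<alpha>) r"
| "msrc Q (Gam i r) = Lay i r"
| "msrc Q (Beta s as) = Lay (ptgt Q (s, as)) 0"
| "msrc Q (BaseA a) = undefined"

fun mtgt :: "('v,'a,'k) uquiver \<Rightarrow> nat \<Rightarrow> ('v,'a) arr \<Rightarrow> 'v vert" where
  "mtgt Q m (ACopy \<alpha> r) = Lay (tgt Q \<alpha>) r"
| "mtgt Q m (Gam i r) = Lay i (Suc r)"
| "mtgt Q m (Beta s as) = Lay s (Suc m)"
| "mtgt Q m (BaseA a) = undefined"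

definition pcopy :: "nat \<Rightarrow> 'v vert \<times> ('v,'a) arr list \<Rightarrow> 'v vert \<times> ('v,'a) arr list" where
  "pcopy r p = (Lay (fst p) r, map (\<lambda>\<alpha>. ACopy \<alpha> r) (snd p))"

definition pushf :: "('P \<Rightarrow> 'R) \<Rightarrow> ('P \<Rightarrow> 'k::field) \<Rightarrow> 'R \<Rightarrow> 'k" where
  "pushf f a = (\<lambda>z. \<Sum>w\<in>{w. a w \<noteq> 0 \<and> f w = z}. a w)"

text \<open>The path x^[m+1] beta_p y^[0] of the multi-layer quiver.\<close>
definition bpath :: "nat \<Rightarrow> ('v vert \<times> ('v,'a) arr list) \<times> ('v vert \<times> ('v,'a) arr list)
     \<times> ('v vert \<times> ('v,'a) arr list) \<Rightarrow> 'v vert \<times> ('v,'a) arr list" where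
  "bpath m t = (case t of (x, p, y) \<Rightarrow>
     (Lay (fst y) 0, map (\<lambda>\<alpha>. ACopy \<alpha> (Suc m)) (snd x) @ [Beta (fst p) (snd p)]
                     @ map (\<lambda>\<alpha>. ACopy \<alpha> 0) (snd y)))"

definition ml_base :: "('v,'a,'k::field) uquiver \<Rightarrow> nat \<Rightarrow> ('v vert \<times> ('v,'a) arr list) set
     \<Rightarrow> ('v,'a,'k) uquiver" where
  "ml_base Q m M = \<lparr> verts = {Lay i r | i r. i \<in> verts Q \<and> r \<le> Suc m},
     arrs = {ACopy \<alpha> r | \<alpha> r. \<alpha> \<in> arrs Q \<and> r \<le> Suc m}
          \<union> {Gam i r | i r. i \<in> verts Q \<and> r \<le> m}
          \<union> {Beta (fst p) (snd p) | p. p \<in> M},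
     src = msrc Q, tgt = mtgt Q m, rels = {} \<rparr>"

text \<open>rho_M: the combinations sum_f c_f x_f^[m+1] beta_f y_f^[0] with
sum_f c_f x_f f^* y_f = 0 in D Lambda (tested on all paths z), which are relations.\<close>
definition rho_M :: "('v,'a,'k::field) uquiver \<Rightarrow> nat \<Rightarrow> ('v vert \<times> ('v,'a) arr list) set
     \<Rightarrow> ('v vert \<times> ('v,'a) arr list \<Rightarrow> 'k) set" where
  "rho_M Q m M = {a. is_relation (ml_base Q m M) a \<and>
     (\<exists>S c. finite S \<and>
        (\<forall>(x, p, y)\<in>S. is_path Q x \<and> p \<in> M \<and> is_path Q y \<and> fst x = fst p
                        \<and> ptgt Q y = ptgt Q p) \<and>
        a = (\<lambda>z. \<Sum>t\<in>S. c t * ebasis (bpath m t) z) \<and>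
        (\<forall>z. is_path Q z \<longrightarrow>
            (\<Sum>t\<in>S. c t * (case t of (x, p, y) \<Rightarrow> dual_act Q m M x p y z)) = 0))}"

definition multilayer :: "('v,'a,'k::field) uquiver \<Rightarrow> nat \<Rightarrow> ('v vert \<times> ('v,'a) arr list) set
     \<Rightarrow> ('v,'a,'k) uquiver" where
  "multilayer Q m M = ml_base Q m M \<lparr> rels :=
        {pushf (pcopy r) \<rho> | \<rho> r. \<rho> \<in> rels Q \<and> r \<le> Suc m}
      \<union> {ebasis (Lay i r, [Gam i (Suc r), Gam i r]) | i r. i \<in> verts Q \<and> r < m}
      \<union> {(\<lambda>z. ebasis (Lay (src Q \<alpha>) r, [ACopy \<alpha> (Suc r), Gam (src Q \<alpha>) r]) z
              - ebasis (Lay (src Q \<alpha>) r, [Gam (tgt Q \<alpha>) r, ACopy \<alpha> r]) z)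
          | \<alpha> r. \<alpha> \<in> arrs Q \<and> r \<le> m}
      \<union> rho_M Q m M \<rparr>"

definition is_multilayer_of :: "('v,'a,'k::field) uquiver \<Rightarrow> ('v,'a,'k) uquiver \<Rightarrow> bool" where
  "is_multilayer_of Q Q' \<longleftrightarrow> (\<exists>m M. finite_bq Q \<and> m_nicely_graded m Q \<and> is_mbasis Q m M
                                   \<and> Q' = multilayer Q m M)"

end

theory Submission
  imports Defs
begin

section \<open>Generic finitely supported functions\<close>

definition ev :: "('p \<Rightarrow> 'k::field) \<Rightarrow> ('p \<Rightarrow> 'k) \<Rightarrow> 'k" where
  "ev \<psi> a = (\<Sum>w\<in>{w. a w \<noteq> 0}. a w * \<psi> w)"

abbreviation fs :: "('p \<Rightarrow> 'k::zero) \<Rightarrow> bool" where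
  "fs a \<equiv> finite {w. a w \<noteq> 0}"

lemma pushf_alt:
  assumes "finite S" "{w. a w \<noteq> 0} \<subseteq> S"
  shows "pushf f a z = (\<Sum>w\<in>S. if f w = z then a w else 0)"
proof -
  have "pushf f a z = (\<Sum>w\<in>{w. a w \<noteq> 0 \<and> f w = z}. a w)" by (simp add: pushf_def)
  also have "\<dots> = (\<Sum>w\<in>S \<inter> {w. f w = z}. a w)"
    apply (rule sum.mono_neutral_left) using assms by auto
  also have "\<dots> = (\<Sum>w\<in>S. if f w = z then a w else 0)" using assms(1) by (simp add: sum.inter_restrict)
  finally show ?thesis .
qed

lemma ev_alt:
  assumes "finite S" "{w. a w \<noteq> 0} \<subseteq> S"
  shows "ev \<psi> a = (\<Sum>w\<in>S. a w * \<psi> w)"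
  unfolding ev_def
  apply (rule sum.mono_neutral_left) using assms by auto

lemma swap_lemma:
  assumes "finite S"
  shows "(\<Sum>u\<in>f ` S. (\<Sum>w\<in>S. if f w = u then a w else 0) * h u) = (\<Sum>w\<in>S. (a w :: 'k::field) * h (f w))"
proof -
  have "(\<Sum>u\<in>f ` S. (\<Sum>w\<in>S. if f w = u then a w else 0) * h u)
      = (\<Sum>u\<in>f ` S. \<Sum>w\<in>S. if f w = u then a w * h u else 0)"
    apply (rule sum.cong[OF refl]) apply (subst sum_distrib_right) apply (rule sum.cong) by auto
  also have "\<dots> = (\<Sum>w\<in>S. \<Sum>u\<in>f ` S. if f w = u then a w * h u else 0)"
    by (rule sum.swap)
  also have "\<dots> = (\<Sum>w\<in>S. a w * h (f w))"
    apply (rule sum.cong[OF refl])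
    apply (subst sum.delta'[OF finite_imageI[OF assms]]) by simp
  finally show ?thesis .
qed

lemma supp_pushf: "{z. pushf f a z \<noteq> 0} \<subseteq> f ` {w. a w \<noteq> 0}"
proof
  fix z assume z: "z \<in> {z. pushf f a z \<noteq> 0}"
  have "{w. a w \<noteq> 0 \<and> f w = z} \<noteq> {}"
  proof
    assume "{w. a w \<noteq> 0 \<and> f w = z} = {}"
    then have "pushf f a z = 0" unfolding pushf_def by (metis (no_types, lifting) sum.empty)
    then show False using z by simp
  qed
  then show "z \<in> f ` {w. a w \<noteq> 0}" by auto
qed

lemma fs_pushf: "fs a \<Longrightarrow> fs (pushf f a)"
  by (rule finite_subset[OF supp_pushf finite_imageI])

lemma ev_pushf:
  assumes "fs a"
  shows "ev \<psi> (pushf f a) = ev (\<lambda>w. \<psi> (f w)) a"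
proof -
  let ?S = "{w. a w \<noteq> 0}"
  have "ev \<psi> (pushf f a) = (\<Sum>u\<in>f ` ?S. pushf f a u * \<psi> u)"
    apply (rule ev_alt) using assms supp_pushf[of f a] by auto
  also have "\<dots> = (\<Sum>u\<in>f ` ?S. (\<Sum>w\<in>?S. if f w = u then a w else 0) * \<psi> u)"
    by (simp add: pushf_alt[OF assms order_refl])
  also have "\<dots> = (\<Sum>w\<in>?S. a w * \<psi> (f w))" by (rule swap_lemma[OF assms])
  also have "\<dots> = ev (\<lambda>w. \<psi> (f w)) a" by (simp add: ev_def)
  finally show ?thesis .
qed

lemma pushf_pushf:
  assumes "fs a"
  shows "pushf g (pushf f a) = pushf (\<lambda>w. g (f w)) a"
proof
  fix z
  let ?S = "{w. a w \<noteq> 0}"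
  have "pushf g (pushf f a) z = (\<Sum>u\<in>f ` ?S. if g u = z then pushf f a u else 0)"
    apply (rule pushf_alt) using assms supp_pushf[of f a] by auto
  also have "\<dots> = (\<Sum>u\<in>f ` ?S. (\<Sum>w\<in>?S. if f w = u then a w else 0) * (if g u = z then 1 else 0))"
    apply (rule sum.cong[OF refl]) apply (simp add: pushf_alt[OF assms order_refl]) done
  also have "\<dots> = (\<Sum>w\<in>?S. a w * (if g (f w) = z then 1 else 0))" by (rule swap_lemma[OF assms])
  also have "\<dots> = (\<Sum>w\<in>?S. if g (f w) = z then a w else 0)" by (rule sum.cong) auto
  also have "\<dots> = pushf (\<lambda>w. g (f w)) a z" by (simp add: pushf_alt[OF assms order_refl])
  finally show "pushf g (pushf f a) z = pushf (\<lambda>w. g (f w)) a z" .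
qed

lemma pushf_add:
  assumes "fs a" "fs b"
  shows "pushf f (\<lambda>z. a z + b z) = (\<lambda>z. pushf f a z + pushf f b z)"
proof
  fix z
  let ?S = "{w. a w \<noteq> 0} \<union> {w. b w \<noteq> 0}"
  have fin: "finite ?S" using assms by auto
  have sa: "{w. a w \<noteq> 0} \<subseteq> ?S" and sb: "{w. b w \<noteq> 0} \<subseteq> ?S" by auto
  have "pushf f (\<lambda>z. a z + b z) z = (\<Sum>w\<in>?S. if f w = z then a w + b w else 0)"
    by (rule pushf_alt[OF fin]) auto
  also have "\<dots> = (\<Sum>w\<in>?S. if f w = z then a w else 0) + (\<Sum>w\<in>?S. if f w = z then b w else 0)"
    unfolding sum.distrib[symmetric] by (rule sum.cong) auto
  also have "\<dots> = pushf f a z + pushf f b z"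
    using pushf_alt[OF fin sa, of f z] pushf_alt[OF fin sb, of f z] by simp
  finally show "pushf f (\<lambda>z. a z + b z) z = pushf f a z + pushf f b z" .
qed

lemma pushf_smult:
  assumes "fs a"
  shows "pushf f (\<lambda>z. c * a z) = (\<lambda>z. c * pushf f a z)"
proof
  fix z
  let ?S = "{w. a w \<noteq> 0}"
  have "pushf f (\<lambda>z. c * a z) z = (\<Sum>w\<in>?S. if f w = z then c * a w else 0)"
    by (rule pushf_alt) (use assms in auto)
  also have "\<dots> = c * (\<Sum>w\<in>?S. if f w = z then a w else 0)"
    by (simp add: sum_distrib_left if_distrib cong: if_cong)
  also have "\<dots> = c * pushf f a z" by (simp add: pushf_alt[OF assms order_refl])
  finally show "pushf f (\<lambda>z. c * a z) z = c * pushf f a z" .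
qed

lemma pushf_diff:
  assumes "fs a" "fs b"
  shows "pushf f (\<lambda>z. a z - b z) = (\<lambda>z. pushf f a z - pushf f b z)"
proof -
  have "fs (\<lambda>z. (-1) * b z)" using assms by simp
  have "(\<lambda>z. a z - b z) = (\<lambda>z. a z + (-1) * b z)" by simp
  then have "pushf f (\<lambda>z. a z - b z) = (\<lambda>z. pushf f a z + pushf f (\<lambda>z. (-1) * b z) z)"
    using pushf_add[OF assms(1) \<open>fs (\<lambda>z. (-1) * b z)\<close>] by simp
  also have "\<dots> = (\<lambda>z. pushf f a z - pushf f b z)" using pushf_smult[OF assms(2), of f "-1"] by simp
  finally show ?thesis .
qed

lemma pushf_zero: "pushf f (\<lambda>_. 0) = (\<lambda>_. (0::'k::field))"
  by (simp add: pushf_def)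

lemma pushf_ebasis: "pushf f (ebasis u) = (ebasis (f u) :: _ \<Rightarrow> 'k::field)"
proof
  fix z
  have "pushf f (ebasis u) z = (\<Sum>w\<in>{u}. if f w = z then (ebasis u w :: 'k) else 0)"
    by (rule pushf_alt) (auto simp: ebasis_def)
  also have "\<dots> = ebasis (f u) z" by (simp add: ebasis_def)
  finally show "pushf f (ebasis u) z = (ebasis (f u) z :: 'k)" .
qed

lemma pushf_restrict: "(\<lambda>z. if C z then pushf f a z else 0) = pushf f (\<lambda>w. if C (f w) then a w else 0)"
  unfolding pushf_def by (rule ext) (auto intro: sum.cong)

lemma ev_add: "fs a \<Longrightarrow> fs b \<Longrightarrow> ev \<psi> (\<lambda>z. a z + b z) = ev \<psi> a + ev \<psi> b"
proof -
  assume a: "fs a" and b: "fs b"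
  let ?S = "{w. a w \<noteq> 0} \<union> {w. b w \<noteq> 0}"
  have fin: "finite ?S" using a b by auto
  have sa: "{w. a w \<noteq> 0} \<subseteq> ?S" and sb: "{w. b w \<noteq> 0} \<subseteq> ?S" by auto
  have "ev \<psi> (\<lambda>z. a z + b z) = (\<Sum>w\<in>?S. (a w + b w) * \<psi> w)" by (rule ev_alt[OF fin]) auto
  also have "\<dots> = (\<Sum>w\<in>?S. a w * \<psi> w) + (\<Sum>w\<in>?S. b w * \<psi> w)"
    by (simp add: distrib_right sum.distrib)
  also have "\<dots> = ev \<psi> a + ev \<psi> b" using ev_alt[OF fin sa] ev_alt[OF fin sb] by simp
  finally show ?thesis .
qed

lemma ev_smult: "fs a \<Longrightarrow> ev \<psi> (\<lambda>z. c * a z) = c * ev \<psi> a"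
proof -
  assume a: "fs a"
  have "ev \<psi> (\<lambda>z. c * a z) = (\<Sum>w\<in>{w. a w \<noteq> 0}. c * a w * \<psi> w)" by (rule ev_alt) (use a in auto)
  also have "\<dots> = c * ev \<psi> a" by (simp add: ev_def sum_distrib_left mult.assoc)
  finally show ?thesis .
qed

lemma ev_zero: "ev \<psi> (\<lambda>_. 0) = 0" by (simp add: ev_def)

lemma ev_ebasis: "ev \<psi> (ebasis u) = (\<psi> u :: 'k::field)"
proof -
  have "ev \<psi> (ebasis u) = (\<Sum>w\<in>{u}. ebasis u w * \<psi> w)" by (rule ev_alt) (auto simp: ebasis_def)
  then show ?thesis by (simp add: ebasis_def)
qed

lemma ev_diff_ebasis: "u1 \<noteq> u2 \<Longrightarrow> ev \<psi> (\<lambda>z. ebasis u1 z - ebasis u2 z) = (\<psi> u1 - \<psi> u2 :: 'k::field)"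
proof -
  assume ne: "u1 \<noteq> u2"
  have "ev \<psi> (\<lambda>z. ebasis u1 z - ebasis u2 z) = (\<Sum>w\<in>{u1, u2}. (ebasis u1 w - ebasis u2 w) * \<psi> w)"
    by (rule ev_alt) (auto simp: ebasis_def)
  then show ?thesis using ne by (simp add: ebasis_def)
qed

lemma ev_restrict: "fs a \<Longrightarrow> ev \<psi> (\<lambda>w. if C w then a w else 0) = ev (\<lambda>w. if C w then \<psi> w else 0) a"
proof -
  assume a: "fs a"
  have "ev \<psi> (\<lambda>w. if C w then a w else 0) = (\<Sum>w\<in>{w. a w \<noteq> 0}. (if C w then a w else 0) * \<psi> w)"
    by (rule ev_alt) (use a in auto)
  also have "\<dots> = ev (\<lambda>w. if C w then \<psi> w else 0) a" unfolding ev_def by (rule sum.cong) auto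
  finally show ?thesis .
qed

lemma ev_cong: "(\<And>w. a w \<noteq> 0 \<Longrightarrow> \<psi> w = \<phi> w) \<Longrightarrow> ev \<psi> a = ev \<phi> a"
  unfolding ev_def by (rule sum.cong) auto

lemma ev_sum_ebasis:
  assumes "finite S"
  shows "ev \<psi> (\<lambda>z. \<Sum>t\<in>S. c t * ebasis (f t) z) = (\<Sum>t\<in>S. (c t :: 'k::field) * \<psi> (f t))"
proof -
  have eq: "(\<lambda>z. \<Sum>t\<in>S. c t * ebasis (f t) z) = (\<lambda>u. \<Sum>t\<in>S. if f t = u then c t else 0)"
    by (rule ext) (rule sum.cong, auto simp: ebasis_def)
  have sub: "{u. (\<Sum>t\<in>S. if f t = u then c t else 0) \<noteq> 0} \<subseteq> f ` S"
  proof
    fix u assume "u \<in> {u. (\<Sum>t\<in>S. if f t = u then c t else 0) \<noteq> 0}"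
    then have "(\<Sum>t\<in>S. if f t = u then c t else 0) \<noteq> 0" by simp
    then obtain t where "t \<in> S" "(if f t = u then c t else 0) \<noteq> 0"
      using sum.not_neutral_contains_not_neutral by blast
    then have "t \<in> S" "f t = u" by (auto split: if_splits)
    then show "u \<in> f ` S" by auto
  qed
  have "ev \<psi> (\<lambda>u. \<Sum>t\<in>S. if f t = u then c t else 0) = (\<Sum>u\<in>f ` S. (\<Sum>t\<in>S. if f t = u then c t else 0) * \<psi> u)"
    by (rule ev_alt[OF finite_imageI[OF assms] sub])
  also have "\<dots> = (\<Sum>t\<in>S. c t * \<psi> (f t))" by (rule swap_lemma[OF assms])
  finally show ?thesis by (simp only: eq)
qed


section \<open>Paths\<close>

lemma all_nat_split: "(\<forall>i::nat. P i) \<longleftrightarrow> P 0 \<and> (\<forall>i. P (Suc i))"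
  by (metis not0_implies_Suc)

lemma is_path_Nil[simp]: "is_path Q (v, []) \<longleftrightarrow> v \<in> verts Q"
  by (simp add: is_path_def)

lemma ptgt_Nil[simp]: "ptgt Q (v, []) = v" by (simp add: ptgt_def)
lemma ptgt_Cons[simp]: "ptgt Q (v, a # L) = tgt Q a" by (simp add: ptgt_def)

lemma is_path_Cons: "is_path Q (v, a # L) \<longleftrightarrow> is_path Q (v, L) \<and> a \<in> arrs Q \<and> src Q a = ptgt Q (v, L)"
proof (cases L)
  case Nil then show ?thesis by (auto simp: is_path_def)
next
  case (Cons b L')
  have "(\<forall>i. Suc i < length (a # L) \<longrightarrow> src Q ((a # L) ! i) = tgt Q ((a # L) ! Suc i))
     \<longleftrightarrow> src Q a = tgt Q b \<and> (\<forall>i. Suc i < length L \<longrightarrow> src Q (L ! i) = tgt Q (L ! Suc i))"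
    using Cons by (subst all_nat_split) auto
  then show ?thesis using Cons by (auto simp: is_path_def)
qed

lemma pcomp_simp: "pcomp q p = (fst p, snd q @ snd p)" by (simp add: pcomp_def)

lemma ptgt_app: "ptgt Q (w, A @ B) = ptgt Q (ptgt Q (w, B), A)"
  by (cases A) auto

lemma ptgt_pcomp: "ptgt Q p = fst q \<Longrightarrow> ptgt Q (pcomp q p) = ptgt Q q"
  by (cases p, cases q) (simp add: ptgt_app pcomp_simp)

lemma is_path_appI: "is_path Q (w, B) \<Longrightarrow> is_path Q (ptgt Q (w, B), A) \<Longrightarrow> is_path Q (w, A @ B)"
proof (induction A)
  case Nil then show ?case by simp
next
  case (Cons a A)
  then show ?case by (simp add: is_path_Cons ptgt_app)
qed

lemma is_path_appD1: "is_path Q (w, A @ B) \<Longrightarrow> is_path Q (w, B)"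
  by (induction A) (auto simp: is_path_Cons)

lemma ptgt_in_verts: "bound_quiver Q \<Longrightarrow> is_path Q p \<Longrightarrow> ptgt Q p \<in> verts Q"
proof -
  assume bq: "bound_quiver Q" and p: "is_path Q p"
  obtain v L where pv: "p = (v, L)" by (cases p)
  show ?thesis
  proof (cases L)
    case Nil then show ?thesis using p pv by simp
  next
    case (Cons a L') then show ?thesis using p pv bq by (auto simp: is_path_Cons bound_quiver_def)
  qed
qed

lemma is_path_appD2: "bound_quiver Q \<Longrightarrow> is_path Q (w, A @ B) \<Longrightarrow> is_path Q (ptgt Q (w, B), A)"
proof (induction A)
  case Nil then show ?case using ptgt_in_verts[of Q "(w, B)"] is_path_appD1[of Q w "[]" B] by simp
next
  case (Cons a A)
  then show ?case by (simp add: is_path_Cons ptgt_app)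
qed

lemma is_path_pcomp: "is_path Q p \<Longrightarrow> is_path Q q \<Longrightarrow> ptgt Q p = fst q \<Longrightarrow> is_path Q (pcomp q p)"
  by (cases p, cases q) (auto intro: is_path_appI simp: pcomp_simp)

lemma path_fst: "is_path Q p \<Longrightarrow> fst p \<in> verts Q" by (simp add: is_path_def)

lemma path_grade:
  assumes "\<forall>\<alpha>\<in>arrs Q. u (tgt Q \<alpha>) = u (src Q \<alpha>) + (1::int)"
  shows "is_path Q (v, L) \<Longrightarrow> u (ptgt Q (v, L)) = u v + int (length L)"
proof (induction L)
  case Nil then show ?case by simp
next
  case (Cons a L)
  then show ?case using assms by (auto simp: is_path_Cons)
qed

section \<open>Ideal lemmas\<close>

definition rfs :: "('V,'A,'k::field) bquiver \<Rightarrow> bool" where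
  "rfs Q \<longleftrightarrow> (\<forall>r\<in>rels Q. fs r)"

lemma mul3_pushf: "mul3 Q x a y = pushf (\<lambda>w. pcomp x (pcomp w y)) (\<lambda>w. if fst w = ptgt Q y \<and> ptgt Q w = fst x then a w else 0)"
  unfolding mul3_def pushf_def
  by (rule ext, rule sum.cong) auto

lemma fs_restrict: "fs a \<Longrightarrow> fs (\<lambda>w. if C w then a w else 0)"
  by (rule finite_subset[of _ "{w. a w \<noteq> 0}"]) auto

lemma fs_mul3: "fs a \<Longrightarrow> fs (mul3 Q x a y)"
  unfolding mul3_pushf by (intro fs_pushf fs_restrict)

lemma ideal_fs:
  assumes "rfs Q"
  shows "a \<in> ideal_of Q \<Longrightarrow> fs a"
proof (induction a rule: ideal_of.induct)
  case zero then show ?case by simp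
next
  case (gen r x y) then show ?case using assms by (intro fs_mul3) (auto simp: rfs_def)
next
  case (add a b)
  have "{z. a z + b z \<noteq> 0} \<subseteq> {z. a z \<noteq> 0} \<union> {z. b z \<noteq> 0}" by auto
  then show ?case using add by (auto intro: finite_subset)
next
  case (smult a c)
  have "{z. c * a z \<noteq> 0} \<subseteq> {z. a z \<noteq> 0}" by auto
  then show ?case using smult by (auto intro: finite_subset)
qed

lemma ev_mul3: "fs r \<Longrightarrow> ev \<psi> (mul3 Q x r y) = ev (\<lambda>w. if fst w = ptgt Q y \<and> ptgt Q w = fst x then \<psi> (pcomp x (pcomp w y)) else 0) r"
  unfolding mul3_pushf
  by (simp add: ev_pushf fs_restrict ev_restrict)

lemma ideal_kill:
  assumes "rfs Q"
    and "\<And>r x y. r \<in> rels Q \<Longrightarrow> is_path Q x \<Longrightarrow> is_path Q y \<Longrightarrow> ev \<psi> (mul3 Q x r y) = 0"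
  shows "a \<in> ideal_of Q \<Longrightarrow> ev \<psi> a = 0"
proof (induction a rule: ideal_of.induct)
  case zero then show ?case by (simp add: ev_zero)
next
  case (gen r x y) then show ?case using assms(2) by blast
next
  case (add a b) then show ?case using ideal_fs[OF assms(1)] by (simp add: ev_add)
next
  case (smult a c) then show ?case using ideal_fs[OF assms(1)] by (simp add: ev_smult)
qed

lemma ideal_zero': "(\<lambda>_. 0) \<in> ideal_of Q" by (rule ideal_of.zero)

lemma ideal_diff: "a \<in> ideal_of Q \<Longrightarrow> b \<in> ideal_of Q \<Longrightarrow> (\<lambda>z. a z - b z) \<in> ideal_of Q"
proof -
  assume a: "a \<in> ideal_of Q" and b: "b \<in> ideal_of Q"
  have "(\<lambda>z. (-1) * b z) \<in> ideal_of Q" using b by (rule ideal_of.smult)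
  from ideal_of.add[OF a this] show ?thesis by simp
qed

lemma ideal_sum: "finite S \<Longrightarrow> (\<And>i. i \<in> S \<Longrightarrow> g i \<in> ideal_of Q) \<Longrightarrow> (\<lambda>z. \<Sum>i\<in>S. c i * g i z) \<in> ideal_of Q"
proof (induction S rule: finite_induct)
  case empty then show ?case by (simp add: ideal_of.zero)
next
  case (insert i S)
  have "(\<lambda>z. c i * g i z) \<in> ideal_of Q" using insert by (intro ideal_of.smult) auto
  from ideal_of.add[OF this insert.IH] insert show ?case by simp
qed

lemma ideal_cong: "a \<in> ideal_of Q \<Longrightarrow> a = b \<Longrightarrow> b \<in> ideal_of Q" by simp

lemma restrict_ebasis: "(\<lambda>w. if C w then ebasis u w else 0) = (if C u then ebasis u else (\<lambda>_. (0::'k::field)))"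
  by (rule ext) (auto simp: ebasis_def)

lemma mul3_ebasis: "mul3 Q x (ebasis u) y = (if fst u = ptgt Q y \<and> ptgt Q u = fst x then ebasis (pcomp x (pcomp u y)) else (\<lambda>_. (0::'k::field)))"
  unfolding mul3_pushf restrict_ebasis
  by (simp add: pushf_ebasis pushf_zero)

lemma restrict_diff: "(\<lambda>w. if C w then a w - b w else 0) = (\<lambda>w. (if C w then a w else 0) - (if C w then b w else (0::'k::field)))"
  by auto

lemma restrict_add: "(\<lambda>w. if C w then a w + b w else 0) = (\<lambda>w. (if C w then a w else 0) + (if C w then b w else (0::'k::field)))"
  by auto

lemma restrict_smult: "(\<lambda>w. if C w then c * a w else 0) = (\<lambda>w. c * (if C w then a w else (0::'k::field)))"
  by auto

lemma mul3_diff: "fs a \<Longrightarrow> fs b \<Longrightarrow> mul3 Q x (\<lambda>z. a z - b z) y = (\<lambda>z. mul3 Q x a y z - mul3 Q x b y z)"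
  unfolding mul3_pushf restrict_diff
  by (simp add: pushf_diff fs_restrict)

lemma mul3_add: "fs a \<Longrightarrow> fs b \<Longrightarrow> mul3 Q x (\<lambda>z. a z + b z) y = (\<lambda>z. mul3 Q x a y z + mul3 Q x b y z)"
  unfolding mul3_pushf restrict_add
  by (simp add: pushf_add fs_restrict)

lemma mul3_smult: "fs a \<Longrightarrow> mul3 Q x (\<lambda>z. c * a z) y = (\<lambda>z. c * mul3 Q x a y z)"
  unfolding mul3_pushf restrict_smult
  by (simp add: pushf_smult fs_restrict)

lemma mul3_zero: "mul3 Q x (\<lambda>_. 0) y = (\<lambda>_. (0::'k::field))"
  by (simp add: mul3_def)

lemma supp_mul3: "mul3 Q x a y z \<noteq> 0 \<Longrightarrow> \<exists>w. a w \<noteq> 0 \<and> fst w = ptgt Q y \<and> ptgt Q w = fst x \<and> z = pcomp x (pcomp w y)"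
proof (rule ccontr)
  assume ne: "mul3 Q x a y z \<noteq> 0" and "\<not> (\<exists>w. a w \<noteq> 0 \<and> fst w = ptgt Q y \<and> ptgt Q w = fst x \<and> z = pcomp x (pcomp w y))"
  then have e: "{w. a w \<noteq> 0 \<and> fst w = ptgt Q y \<and> ptgt Q w = fst x \<and> pcomp x (pcomp w y) = z} = {}"
    by auto
  have "mul3 Q x a y z = 0" unfolding mul3_def e by simp
  then show False using ne by simp
qed

lemma mul3_mul3:
  assumes "fs r"
  shows "mul3 Q X (mul3 Q x r y) Y = (if ptgt Q Y = fst y \<and> ptgt Q x = fst X then mul3 Q (pcomp X x) r (pcomp y Y) else (\<lambda>_. 0))"
proof -
  define r1 where "r1 = (\<lambda>w. if fst w = ptgt Q y \<and> ptgt Q w = fst x then r w else 0)"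
  define f1 where "f1 = (\<lambda>w. pcomp x (pcomp w y))"
  have fr1: "fs r1" unfolding r1_def by (rule fs_restrict[OF assms])
  define C where "C = (ptgt Q Y = fst y \<and> ptgt Q x = fst X)"
  have m1: "mul3 Q x r y = pushf f1 r1" unfolding r1_def f1_def by (rule mul3_pushf)
  have "mul3 Q X (mul3 Q x r y) Y = pushf (\<lambda>w. pcomp X (pcomp w Y))
      (\<lambda>z. if fst z = ptgt Q Y \<and> ptgt Q z = fst X then pushf f1 r1 z else 0)"
    unfolding m1 by (rule mul3_pushf)
  also have "\<dots> = pushf (\<lambda>w. pcomp X (pcomp w Y)) (pushf f1 (\<lambda>w. if fst (f1 w) = ptgt Q Y \<and> ptgt Q (f1 w) = fst X then r1 w else 0))"
    by (subst pushf_restrict) simp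
  also have "(\<lambda>w. if fst (f1 w) = ptgt Q Y \<and> ptgt Q (f1 w) = fst X then r1 w else 0) = (\<lambda>w. if C then r1 w else 0)"
  proof
    fix w
    show "(if fst (f1 w) = ptgt Q Y \<and> ptgt Q (f1 w) = fst X then r1 w else 0) = (if C then r1 w else 0)"
    proof (cases "r1 w = 0")
      case True then show ?thesis by simp
    next
      case False
      then have c1: "fst w = ptgt Q y" "ptgt Q w = fst x" unfolding r1_def by (auto split: if_splits)
      have "ptgt Q (pcomp w y) = ptgt Q w" using c1 by (intro ptgt_pcomp) simp
      then have "ptgt Q (f1 w) = ptgt Q x" unfolding f1_def using c1 by (intro ptgt_pcomp) simp
      moreover have "fst (f1 w) = fst y" unfolding f1_def by (simp add: pcomp_simp)
      ultimately show ?thesis unfolding C_def by auto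
    qed
  qed
  finally have eq: "mul3 Q X (mul3 Q x r y) Y = pushf (\<lambda>w. pcomp X (pcomp w Y)) (pushf f1 (\<lambda>w. if C then r1 w else 0))" .
  show ?thesis
  proof (cases C)
    case False
    have z: "mul3 Q X (mul3 Q x r y) Y = (\<lambda>_. 0)" using eq False by (simp add: pushf_zero)
    have nC: "\<not> (ptgt Q Y = fst y \<and> ptgt Q x = fst X)" using False unfolding C_def .
    show ?thesis unfolding if_not_P[OF nC] by (rule z)
  next
    case True
    have "mul3 Q X (mul3 Q x r y) Y = pushf (\<lambda>w. pcomp X (pcomp (f1 w) Y)) r1"
      using eq True by (simp add: pushf_pushf fr1)
    also have "\<dots> = mul3 Q (pcomp X x) r (pcomp y Y)"
    proof -
      have "ptgt Q (pcomp y Y) = ptgt Q y" using True unfolding C_def by (intro ptgt_pcomp) simp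
      then have "r1 = (\<lambda>w. if fst w = ptgt Q (pcomp y Y) \<and> ptgt Q w = fst (pcomp X x) then r w else 0)"
        unfolding r1_def by (simp add: pcomp_simp)
      moreover have "(\<lambda>w. pcomp X (pcomp (f1 w) Y)) = (\<lambda>w. pcomp (pcomp X x) (pcomp w (pcomp y Y)))"
        unfolding f1_def by (simp add: pcomp_simp)
      ultimately show ?thesis by (simp add: mul3_pushf)
    qed
    finally have z: "mul3 Q X (mul3 Q x r y) Y = mul3 Q (pcomp X x) r (pcomp y Y)" .
    have C': "ptgt Q Y = fst y \<and> ptgt Q x = fst X" using True unfolding C_def .
    show ?thesis unfolding if_P[OF C'] by (rule z)
  qed
qed

lemma mul3_closed:
  assumes "rfs Q"
  shows "a \<in> ideal_of Q \<Longrightarrow> is_path Q X \<Longrightarrow> is_path Q Y \<Longrightarrow> mul3 Q X a Y \<in> ideal_of Q"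
proof (induction a rule: ideal_of.induct)
  case zero then show ?case by (simp add: mul3_zero ideal_of.zero)
next
  case (gen r x y)
  have "fs r" using gen assms by (auto simp: rfs_def)
  show ?case
  proof (cases "ptgt Q Y = fst y \<and> ptgt Q x = fst X")
    case True
    then have i: "mul3 Q (pcomp X x) r (pcomp y Y) \<in> ideal_of Q"
      using gen by (intro ideal_of.gen is_path_pcomp) auto
    have "mul3 Q X (mul3 Q x r y) Y = mul3 Q (pcomp X x) r (pcomp y Y)"
      unfolding mul3_mul3[OF \<open>fs r\<close>, of Q X x y Y] if_P[OF True] ..
    then show ?thesis using i by simp
  next
    case False
    show ?thesis unfolding mul3_mul3[OF \<open>fs r\<close>, of Q X x y Y] if_not_P[OF False] by (rule ideal_of.zero)
  qed
next
  case (add a b)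
  then show ?case using ideal_fs[OF assms] by (simp add: mul3_add ideal_of.add)
next
  case (smult a c)
  then show ?case using ideal_fs[OF assms] by (simp add: mul3_smult ideal_of.smult)
qed

lemma ideal_restrict_ends:
  assumes "rfs Q"
  shows "a \<in> ideal_of Q \<Longrightarrow> (\<lambda>z. if fst z = s \<and> ptgt Q z = t then a z else 0) \<in> ideal_of Q"
proof (induction a rule: ideal_of.induct)
  case zero then show ?case by (simp add: ideal_of.zero)
next
  case (gen r x y)
  have ends: "fst z = fst y \<and> ptgt Q z = ptgt Q x" if nz: "mul3 Q x r y z \<noteq> 0" for z
  proof -
    obtain w where w: "r w \<noteq> 0" "fst w = ptgt Q y" "ptgt Q w = fst x" "z = pcomp x (pcomp w y)"
      using supp_mul3[of Q x r y z] nz by blast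
    have "ptgt Q (pcomp w y) = ptgt Q w" using w by (intro ptgt_pcomp) simp
    then have "ptgt Q (pcomp x (pcomp w y)) = ptgt Q x" using w by (intro ptgt_pcomp) simp
    then have "ptgt Q z = ptgt Q x" using w(4) by simp
    then show ?thesis using w by (simp add: pcomp_simp)
  qed
  show ?case
  proof (cases "fst y = s \<and> ptgt Q x = t")
    case True
    have "(\<lambda>z. if fst z = s \<and> ptgt Q z = t then mul3 Q x r y z else 0) = mul3 Q x r y"
    proof
      fix z show "(if fst z = s \<and> ptgt Q z = t then mul3 Q x r y z else 0) = mul3 Q x r y z"
        using ends[of z] True by (cases "mul3 Q x r y z = 0") auto
    qed
    then show ?thesis using gen by (simp add: ideal_of.gen)
  next
    case False
    have "(\<lambda>z. if fst z = s \<and> ptgt Q z = t then mul3 Q x r y z else 0) = (\<lambda>_. 0)"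
    proof
      fix z show "(if fst z = s \<and> ptgt Q z = t then mul3 Q x r y z else 0) = 0"
        using ends[of z] False by (cases "mul3 Q x r y z = 0") auto
    qed
    then show ?thesis by (simp add: ideal_of.zero)
  qed
next
  case (add a b)
  have "(\<lambda>z. if fst z = s \<and> ptgt Q z = t then a z + b z else 0) =
        (\<lambda>z. (if fst z = s \<and> ptgt Q z = t then a z else 0) + (if fst z = s \<and> ptgt Q z = t then b z else 0))"
    by auto
  moreover have "(\<lambda>z. (if fst z = s \<and> ptgt Q z = t then a z else 0) + (if fst z = s \<and> ptgt Q z = t then b z else 0)) \<in> ideal_of Q"
    by (rule ideal_of.add[OF add.IH(1) add.IH(2)])
  ultimately show ?case by simp
next
  case (smult a c)
  have "(\<lambda>z. if fst z = s \<and> ptgt Q z = t then c * a z else 0) =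
        (\<lambda>z. c * (if fst z = s \<and> ptgt Q z = t then a z else 0))"
    by auto
  moreover have "(\<lambda>z. c * (if fst z = s \<and> ptgt Q z = t then a z else 0)) \<in> ideal_of Q"
    by (rule ideal_of.smult[OF smult.IH])
  ultimately show ?case by simp
qed

lemma ideal_paths:
  assumes "\<forall>r\<in>rels Q. \<forall>w. r w \<noteq> 0 \<longrightarrow> is_path Q w"
  shows "a \<in> ideal_of Q \<Longrightarrow> a z \<noteq> 0 \<Longrightarrow> is_path Q z"
proof (induction a arbitrary: z rule: ideal_of.induct)
  case zero then show ?case by simp
next
  case (gen r x y)
  obtain w where w: "r w \<noteq> 0" "fst w = ptgt Q y" "ptgt Q w = fst x" "z = pcomp x (pcomp w y)"
    using supp_mul3[OF gen(4)] by blast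
  have pw: "is_path Q w" using assms gen w by blast
  have "is_path Q (pcomp w y)" using pw gen w by (intro is_path_pcomp) auto
  moreover have "ptgt Q (pcomp w y) = fst x" using w by (subst ptgt_pcomp) auto
  ultimately have "is_path Q (pcomp x (pcomp w y))" using gen by (rule_tac is_path_pcomp) auto
  then show ?case using w by simp
next
  case (add a b) then show ?case by (cases "a z = 0") auto
next
  case (smult a c) then show ?case by (cases "a z = 0") auto
qed

section \<open>Bases modulo the ideal\<close>

lemma lincomb_ind: "finite M \<Longrightarrow> p \<in> M \<Longrightarrow> lincomb M (\<lambda>q. if q = p then 1 else 0) = ebasis p"
  unfolding lincomb_def
proof (rule ext)
  fix z assume "finite M" "p \<in> M"
  have "(\<Sum>q\<in>M. (if q = p then 1 else 0) * ebasis q z) = (\<Sum>q\<in>M. if q = p then ebasis p z else 0)"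
    by (rule sum.cong) auto
  also have "\<dots> = ebasis p z" using \<open>finite M\<close> \<open>p \<in> M\<close> by simp
  finally show "(\<Sum>q\<in>M. (if q = p then 1 else 0) * ebasis q z) = ebasis p z" .
qed

lemma lincomb_lin: "lincomb M (\<lambda>q. c1 q - k * c2 q) z = lincomb M c1 z - k * lincomb M c2 z"
  unfolding lincomb_def by (simp add: algebra_simps sum_subtractf sum_distrib_left)

lemma lincomb_zero_on: "(\<forall>p\<in>M. c p = 0) \<Longrightarrow> lincomb M c = (\<lambda>_. 0)"
  unfolding lincomb_def by (rule ext) simp

lemma coord_kill:
  assumes indep: "\<forall>c. lincomb M c \<in> ideal_of Q \<longrightarrow> (\<forall>p\<in>M. c p = 0)"
    and finM: "finite M" and b: "b \<in> ideal_of Q" and finZ: "finite Z" and sub: "{w. b w \<noteq> 0} \<subseteq> Z"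
    and cf: "\<And>z. z \<in> Z \<Longrightarrow> (\<lambda>u. ebasis z u - lincomb M (cf z) u) \<in> ideal_of Q"
  shows "\<forall>p\<in>M. (\<Sum>z\<in>Z. b z * cf z p) = 0"
proof -
  define d where "d = (\<lambda>p. \<Sum>z\<in>Z. b z * cf z p)"
  have h1: "(\<lambda>u. \<Sum>z\<in>Z. b z * (ebasis z u - lincomb M (cf z) u)) \<in> ideal_of Q"
    by (rule ideal_sum[OF finZ cf])
  have h2: "(\<lambda>u. \<Sum>z\<in>Z. b z * (ebasis z u - lincomb M (cf z) u)) = (\<lambda>u. b u - lincomb M d u)"
  proof
    fix u
    have e1: "(\<Sum>z\<in>Z. b z * ebasis z u) = b u"
    proof -
      have "(\<Sum>z\<in>Z. b z * ebasis z u) = (\<Sum>z\<in>Z. if u = z then b z else 0)"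
        by (rule sum.cong) (auto simp: ebasis_def)
      also have "\<dots> = (if u \<in> Z then b u else 0)" using finZ by simp
      also have "\<dots> = b u" using sub by auto
      finally show ?thesis .
    qed
    have e2: "(\<Sum>z\<in>Z. b z * lincomb M (cf z) u) = lincomb M d u"
      unfolding lincomb_def d_def
      by (simp add: sum_distrib_left sum_distrib_right mult.assoc) (rule sum.swap)
    show "(\<Sum>z\<in>Z. b z * (ebasis z u - lincomb M (cf z) u)) = b u - lincomb M d u"
      using e1 e2 by (simp add: right_diff_distrib sum_subtractf)
  qed
  have "(\<lambda>u. b u - (b u - lincomb M d u)) \<in> ideal_of Q"
    using ideal_diff[OF b h1[unfolded h2]] .
  then have "lincomb M d \<in> ideal_of Q" by simp
  then show ?thesis using indep unfolding d_def by blast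
qed

lemma basis_exists:
  assumes "finite P"
  shows "\<exists>M\<subseteq>P. (\<forall>c. lincomb M c \<in> ideal_of Q \<longrightarrow> (\<forall>p\<in>M. c p = 0))
      \<and> (\<forall>q\<in>P. \<exists>c. (\<lambda>z. ebasis q z - lincomb M c z) \<in> ideal_of Q)"
proof -
  define F where "F = (\<lambda>M. M \<subseteq> P \<and> (\<forall>q\<in>P. \<exists>c. (\<lambda>z. ebasis q z - lincomb M c z) \<in> ideal_of Q))"
  have "F P"
  proof -
    have "(\<lambda>z. ebasis q z - lincomb P (\<lambda>q'. if q' = q then 1 else 0) z) \<in> ideal_of Q" if "q \<in> P" for q
      unfolding lincomb_ind[OF assms that] by (simp add: ideal_of.zero)
    then show ?thesis unfolding F_def by blast
  qed
  then obtain M where FM: "F M" and minM: "\<And>M'. F M' \<Longrightarrow> card M \<le> card M'"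
    using ex_has_least_nat[of F P card] by blast
  have finM: "finite M" using FM assms unfolding F_def by (auto intro: finite_subset)
  have indep: "\<forall>p\<in>M. c p = 0" if lc: "lincomb M c \<in> ideal_of Q" for c
  proof (rule ccontr)
    assume "\<not> (\<forall>p\<in>M. c p = 0)"
    then obtain p where pM: "p \<in> M" and cp: "c p \<noteq> 0" by blast
    have "F (M - {p})"
    proof -
      have "\<exists>c'. (\<lambda>z. ebasis q z - lincomb (M - {p}) c' z) \<in> ideal_of Q" if qP: "q \<in> P" for q
      proof -
        obtain d where d: "(\<lambda>z. ebasis q z - lincomb M d z) \<in> ideal_of Q" using FM qP unfolding F_def by blast
        define k where "k = d p / c p"
        define d' where "d' = (\<lambda>p'. d p' - k * c p')"
        have d'p: "d' p = 0" unfolding d'_def k_def using cp by simp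
        have "lincomb (M - {p}) d' = lincomb M d'"
        proof
          fix z
          show "lincomb (M - {p}) d' z = lincomb M d' z"
            unfolding lincomb_def using finM pM d'p by (simp add: sum.remove)
        qed
        moreover have "lincomb M d' z = lincomb M d z - k * lincomb M c z" for z
          unfolding d'_def by (rule lincomb_lin)
        ultimately have eq: "(\<lambda>z. ebasis q z - lincomb (M - {p}) d' z) = (\<lambda>z. (ebasis q z - lincomb M d z) + k * lincomb M c z)"
          by (auto simp: algebra_simps)
        have "(\<lambda>z. (ebasis q z - lincomb M d z) + k * lincomb M c z) \<in> ideal_of Q"
          by (rule ideal_of.add[OF d ideal_of.smult[OF lc]])
        then show ?thesis using eq by metis
      qed
      then show ?thesis using FM unfolding F_def by auto
    qed
    then have "card M \<le> card (M - {p})" by (rule minM)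
    moreover have "card (M - {p}) < card M" by (rule card_Diff1_less[OF finM pM])
    ultimately show False by simp
  qed
  show ?thesis using FM indep unfolding F_def by blast
qed


lemma bq_rfs: "bound_quiver Q \<Longrightarrow> rfs Q"
  by (auto simp: bound_quiver_def is_relation_def rfs_def)

lemma bq_rpaths: "bound_quiver Q \<Longrightarrow> \<forall>r\<in>rels Q. \<forall>w. r w \<noteq> 0 \<longrightarrow> is_path Q w"
  by (auto simp: bound_quiver_def is_relation_def)

lemma path_len_bound:
  assumes "finite_bq Q" "nicely_graded Q"
  shows "\<exists>N. \<forall>p. is_path Q p \<longrightarrow> plen p \<le> N"
proof -
  obtain u :: "_ \<Rightarrow> int" where u: "\<forall>\<alpha>\<in>arrs Q. u (tgt Q \<alpha>) = u (src Q \<alpha>) + 1"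
    using assms(2) unfolding nicely_graded_def by blast
  have bq: "bound_quiver Q" using assms(2) unfolding nicely_graded_def by blast
  have fin: "finite (u ` verts Q)" using assms(1) unfolding finite_bq_def by blast
  define N where "N = nat (Max (u ` verts Q) - Min (u ` verts Q))"
  have "plen p \<le> N" if p: "is_path Q p" for p
  proof -
    obtain v L where pv: "p = (v, L)" by (cases p)
    have g: "u (ptgt Q (v, L)) = u v + int (length L)" using path_grade[OF u] p pv by blast
    have v: "v \<in> verts Q" using p pv by (simp add: is_path_def)
    have t: "ptgt Q (v, L) \<in> verts Q" using ptgt_in_verts[OF bq] p pv by blast
    have "u (ptgt Q (v, L)) \<le> Max (u ` verts Q)" using fin t by simp
    moreover have "Min (u ` verts Q) \<le> u v" using fin v by simp
    ultimately show ?thesis using g pv unfolding N_def plen_def by simp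
  qed
  then show ?thesis by blast
qed

lemma finite_paths:
  assumes "finite_bq Q" "nicely_graded Q"
  shows "finite {p. is_path Q p}"
proof -
  obtain N where N: "\<forall>p. is_path Q p \<longrightarrow> plen p \<le> N" using path_len_bound[OF assms] by blast
  have "{p. is_path Q p} \<subseteq> verts Q \<times> {L. set L \<subseteq> arrs Q \<and> length L \<le> N}"
  proof
    fix p assume "p \<in> {p. is_path Q p}"
    then have p: "is_path Q p" by simp
    have "length (snd p) \<le> N" using N p unfolding plen_def by blast
    moreover have "fst p \<in> verts Q" "set (snd p) \<subseteq> arrs Q" using p unfolding is_path_def by auto
    ultimately show "p \<in> verts Q \<times> {L. set L \<subseteq> arrs Q \<and> length L \<le> N}" by (cases p) auto
  qed
  moreover have "finite (verts Q \<times> {L. set L \<subseteq> arrs Q \<and> length L \<le> N})"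
    using assms(1) unfolding finite_bq_def by (intro finite_cartesian_product finite_lists_length_le) auto
  ultimately show ?thesis by (rule finite_subset)
qed

lemma not_max_ext:
  "bound_path Q p \<Longrightarrow> \<not> maximal_bound_path Q p \<Longrightarrow>
   \<exists>\<alpha>\<in>arrs Q. (src Q \<alpha> = ptgt Q p \<and> bound_path Q (fst p, \<alpha> # snd p)) \<or>
               (tgt Q \<alpha> = fst p \<and> bound_path Q (src Q \<alpha>, snd p @ [\<alpha>]))"
  unfolding maximal_bound_path_def by blast

lemma bound_le:
  assumes fin: "finite_bq Q" and ng: "m_nicely_graded m Q"
  shows "bound_path Q p \<Longrightarrow> plen p \<le> m"
proof -
  have ngr: "nicely_graded Q" and pg: "properly_graded m Q" using ng unfolding m_nicely_graded_def by auto
  obtain N where N: "\<forall>p. is_path Q p \<longrightarrow> plen p \<le> N" using path_len_bound[OF fin ngr] by blast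
  have main: "\<forall>p. N - plen p \<le> k \<longrightarrow> bound_path Q p \<longrightarrow> plen p \<le> m" for k
  proof (induction k)
    case 0
    show ?case
    proof (intro allI impI)
      fix p assume k: "N - plen p \<le> 0" and b: "bound_path Q p"
      show "plen p \<le> m"
      proof (cases "maximal_bound_path Q p")
        case True
        have "plen p = m" using pg True unfolding properly_graded_def by blast
        then show ?thesis by simp
      next
        case False
        then obtain p' where "bound_path Q p'" "plen p' = Suc (plen p)"
          using not_max_ext[OF b] unfolding plen_def by auto
        moreover have "plen p' \<le> N" using N calculation(1) unfolding bound_path_def by blast
        ultimately show ?thesis using k by simp
      qed
    qed
  next
    case (Suc k)
    show ?case
    proof (intro allI impI)
      fix p assume k: "N - plen p \<le> Suc k" and b: "bound_path Q p"
      show "plen p \<le> m"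
      proof (cases "maximal_bound_path Q p")
        case True
        have "plen p = m" using pg True unfolding properly_graded_def by blast
        then show ?thesis by simp
      next
        case False
        then obtain p' where p': "bound_path Q p'" "plen p' = Suc (plen p)"
          using not_max_ext[OF b] unfolding plen_def by auto
        have "plen p' \<le> N" using N p'(1) unfolding bound_path_def by blast
        then have "N - plen p' \<le> k" using k p'(2) by simp
        then have "plen p' \<le> m" using Suc.IH p'(1) by blast
        then show ?thesis using p'(2) by simp
      qed
    qed
  qed
  show "bound_path Q p \<Longrightarrow> plen p \<le> m" by (rule main[of "N - plen p", rule_format, OF order_refl])
qed

lemma mbasis_exists:
  assumes fin: "finite_bq Q" and ng: "m_nicely_graded m Q"
  shows "\<exists>M. is_mbasis Q m M"
proof -
  have ngr: "nicely_graded Q" using ng unfolding m_nicely_graded_def by auto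
  define P where "P = {q. is_path Q q \<and> plen q = m}"
  have finP: "finite P" unfolding P_def by (rule finite_subset[OF _ finite_paths[OF fin ngr]]) auto
  have ex: "\<exists>M\<subseteq>P. (\<forall>c. lincomb M c \<in> ideal_of Q \<longrightarrow> (\<forall>p\<in>M. c p = 0))
      \<and> (\<forall>q\<in>P. \<exists>c. (\<lambda>z. ebasis q z - lincomb M c z) \<in> ideal_of Q)"
    by (rule basis_exists[OF finP])
  then obtain M where MP: "M \<subseteq> P" and indep: "\<forall>c. lincomb M c \<in> ideal_of Q \<longrightarrow> (\<forall>p\<in>M. c p = 0)"
    and span: "\<forall>q\<in>P. \<exists>c. (\<lambda>z. ebasis q z - lincomb M c z) \<in> ideal_of Q"
    by (elim exE conjE) (simp only:)
  have finM: "finite M" using MP finP by (rule finite_subset)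
  have nb: "\<not> bound_path Q p'" if "plen p' = Suc m" for p'
    using bound_le[OF fin ng, of p'] that by auto
  have mx: "maximal_bound_path Q p \<and> plen p = m" if pM: "p \<in> M" for p
  proof -
    have pp: "is_path Q p" "plen p = m" using pM MP unfolding P_def by auto
    have "ebasis p \<notin> ideal_of Q"
    proof
      assume "ebasis p \<in> ideal_of Q"
      then have "lincomb M (\<lambda>q. if q = p then 1 else 0) \<in> ideal_of Q" unfolding lincomb_ind[OF finM pM] .
      then have "(\<lambda>q. if q = p then (1::'c) else 0) p = 0" using indep pM by blast
      then show False by simp
    qed
    then have b: "bound_path Q p" using pp unfolding bound_path_def by blast
    have "\<not> bound_path Q (fst p, \<alpha> # snd p)" for \<alpha>
      by (rule nb) (use pp in \<open>simp add: plen_def\<close>)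
    moreover have "\<not> bound_path Q (src Q \<alpha>, snd p @ [\<alpha>])" for \<alpha>
      by (rule nb) (use pp in \<open>simp add: plen_def\<close>)
    ultimately have "maximal_bound_path Q p" using b unfolding maximal_bound_path_def by blast
    then show ?thesis using pp by blast
  qed
  have span': "\<forall>q. is_path Q q \<and> plen q = m \<longrightarrow> (\<exists>c. (\<lambda>z. ebasis q z - lincomb M c z) \<in> ideal_of Q)"
    using span unfolding P_def by blast
  have "is_mbasis Q m M" unfolding is_mbasis_def
    using finM mx indep span' by blast
  then show ?thesis by blast
qed

lemma theta_exists:
  assumes fin: "finite_bq Q" and ngr: "nicely_graded Q" and bw: "bound_path Q w"
  shows "\<exists>\<theta>. (\<forall>a\<in>ideal_of Q. ev \<theta> a = 0) \<and> \<theta> w \<noteq> 0"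
proof -
  have bq: "bound_quiver Q" using ngr unfolding nicely_graded_def by blast
  define P where "P = {p. is_path Q p}"
  have finP: "finite P" unfolding P_def by (rule finite_paths[OF fin ngr])
  have ex: "\<exists>M\<subseteq>P. (\<forall>c. lincomb M c \<in> ideal_of Q \<longrightarrow> (\<forall>p\<in>M. c p = 0))
      \<and> (\<forall>q\<in>P. \<exists>c. (\<lambda>z. ebasis q z - lincomb M c z) \<in> ideal_of Q)"
    by (rule basis_exists[OF finP])
  then obtain M where MP: "M \<subseteq> P" and indep: "\<forall>c. lincomb M c \<in> ideal_of Q \<longrightarrow> (\<forall>p\<in>M. c p = 0)"
    and span: "\<forall>q\<in>P. \<exists>c. (\<lambda>z. ebasis q z - lincomb M c z) \<in> ideal_of Q"
    by (elim exE conjE) (simp only:)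
  have finM: "finite M" using MP finP by (rule finite_subset)
  define cf where "cf = (\<lambda>q. SOME c. (\<lambda>z. ebasis q z - lincomb M c z) \<in> ideal_of Q)"
  have cf: "(\<lambda>z. ebasis q z - lincomb M (cf q) z) \<in> ideal_of Q" if "q \<in> P" for q
  proof -
    have "\<exists>c. (\<lambda>z. ebasis q z - lincomb M c z) \<in> ideal_of Q" using span that by blast
    then show ?thesis unfolding cf_def by (rule someI_ex)
  qed
  have wP: "w \<in> P" using bw unfolding bound_path_def P_def by simp
  obtain p0 where p0: "p0 \<in> M" "cf w p0 \<noteq> 0"
  proof (rule ccontr)
    assume "\<not> thesis"
    then have "\<forall>p\<in>M. cf w p = 0" using that by blast
    then have "lincomb M (cf w) = (\<lambda>_. 0)" by (rule lincomb_zero_on)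
    then have "ebasis w \<in> ideal_of Q" using cf[OF wP] by simp
    then show False using bw unfolding bound_path_def by simp
  qed
  define \<theta> where "\<theta> = (\<lambda>q. cf q p0)"
  have "ev \<theta> a = 0" if a: "a \<in> ideal_of Q" for a
  proof -
    have fa: "fs a" using ideal_fs[OF bq_rfs[OF bq] a] .
    have sub: "{z. a z \<noteq> 0} \<subseteq> P" using ideal_paths[OF bq_rpaths[OF bq] a] unfolding P_def by blast
    have "\<forall>p\<in>M. (\<Sum>z\<in>{z. a z \<noteq> 0}. a z * cf z p) = 0"
      by (rule coord_kill[OF indep finM a fa order_refl]) (use cf sub in blast)
    then show ?thesis using p0 unfolding ev_def \<theta>_def by blast
  qed
  then show ?thesis using p0 unfolding \<theta>_def by blast
qed

section \<open>Coordinates with respect to an m-basis\<close>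

definition cspec :: "('V,'A,'k::field) bquiver \<Rightarrow> ('V \<times> 'A list) set \<Rightarrow> 'V \<times> 'A list \<Rightarrow> ('V \<times> 'A list \<Rightarrow> 'k) \<Rightarrow> bool" where
  "cspec Q M q c \<longleftrightarrow> (\<forall>p. p \<notin> M \<longrightarrow> c p = 0) \<and> (\<lambda>z. ebasis q z - lincomb M c z) \<in> ideal_of Q"

lemma lincomb_apply: "finite M \<Longrightarrow> lincomb M c z = (if z \<in> M then c z else 0)"
proof -
  assume fM: "finite M"
  have "lincomb M c z = (\<Sum>p\<in>M. if z = p then c p else 0)"
    unfolding lincomb_def by (rule sum.cong) (auto simp: ebasis_def)
  also have "\<dots> = (if z \<in> M then c z else 0)" using fM by simp
  finally show ?thesis .
qed

lemma lincomb_sub: "lincomb M (\<lambda>q. c1 q - c2 q) z = lincomb M c1 z - lincomb M c2 z"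
  unfolding lincomb_def by (simp add: algebra_simps sum_subtractf)

lemma cspec_unique:
  assumes mb: "is_mbasis Q m M" and c1: "cspec Q M q c1" and c2: "cspec Q M q c2"
  shows "c1 = c2"
proof -
  have indep: "\<forall>c. lincomb M c \<in> ideal_of Q \<longrightarrow> (\<forall>p\<in>M. c p = 0)" using mb unfolding is_mbasis_def by blast
  have "(\<lambda>z. (ebasis q z - lincomb M c2 z) - (ebasis q z - lincomb M c1 z)) \<in> ideal_of Q"
    using ideal_diff[of "\<lambda>z. ebasis q z - lincomb M c2 z" Q "\<lambda>z. ebasis q z - lincomb M c1 z"] c1 c2
    unfolding cspec_def by blast
  moreover have "(\<lambda>z. (ebasis q z - lincomb M c2 z) - (ebasis q z - lincomb M c1 z)) = lincomb M (\<lambda>p. c1 p - c2 p)"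
    by (rule ext) (simp add: lincomb_sub)
  ultimately have "lincomb M (\<lambda>p. c1 p - c2 p) \<in> ideal_of Q" by simp
  then have "\<forall>p\<in>M. c1 p - c2 p = 0" using indep by blast
  then show ?thesis using c1 c2 unfolding cspec_def by (metis eq_iff_diff_eq_0 ext)
qed

lemma cspec_exists:
  assumes mb: "is_mbasis Q m M" and q: "is_path Q q" "plen q = m"
  shows "\<exists>c. cspec Q M q c"
proof -
  obtain c where c: "(\<lambda>z. ebasis q z - lincomb M c z) \<in> ideal_of Q" using mb q unfolding is_mbasis_def by blast
  define c' where "c' = (\<lambda>p. if p \<in> M then c p else 0)"
  have "lincomb M c' = lincomb M c" unfolding lincomb_def c'_def by (rule ext, rule sum.cong) auto
  then show ?thesis using c unfolding cspec_def c'_def by (rule_tac x=c' in exI) (auto simp: c'_def)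
qed

lemma dualf_cspec:
  assumes mb: "is_mbasis Q m M" and q: "is_path Q q" "plen q = m"
  shows "cspec Q M q (\<lambda>p. dualf Q m M p q)"
proof -
  have ex1: "\<exists>!c. cspec Q M q c" using cspec_exists[OF mb q] cspec_unique[OF mb] by blast
  have "(\<lambda>p. dualf Q m M p q) = (THE c. cspec Q M q c)"
    unfolding dualf_def cspec_def using q by simp
  then show ?thesis using theI'[OF ex1] by simp
qed

lemma dualf_eq:
  assumes mb: "is_mbasis Q m M" and q: "is_path Q q" "plen q = m" and c: "cspec Q M q c"
  shows "dualf Q m M p q = c p"
  using cspec_unique[OF mb dualf_cspec[OF mb q] c] by metis

lemma dualf_nz: "dualf Q m M p q \<noteq> 0 \<Longrightarrow> is_path Q q \<and> plen q = m"
  unfolding dualf_def by (auto split: if_splits)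

lemma mbasis_paths: "is_mbasis Q m M \<Longrightarrow> p \<in> M \<Longrightarrow> is_path Q p \<and> plen p = m"
  unfolding is_mbasis_def maximal_bound_path_def bound_path_def by blast

lemma dualf_ind:
  assumes mb: "is_mbasis Q m M" and pM: "p \<in> M"
  shows "dualf Q m M p' p = (if p' = p then 1 else 0)"
proof -
  have finM: "finite M" using mb unfolding is_mbasis_def by blast
  have "cspec Q M p (\<lambda>q. if q = p then 1 else 0)"
    unfolding cspec_def lincomb_ind[OF finM pM] using pM by (auto simp: ideal_of.zero)
  from dualf_eq[OF mb _ _ this] mbasis_paths[OF mb pM] show ?thesis by blast
qed

lemma dualf_ends:
  assumes mb: "is_mbasis Q m M" and bq: "bound_quiver Q" and nz: "dualf Q m M p q \<noteq> 0"
  shows "fst p = fst q \<and> ptgt Q p = ptgt Q q"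
proof -
  have q: "is_path Q q" "plen q = m" using dualf_nz[OF nz] by auto
  have finM: "finite M" using mb unfolding is_mbasis_def by blast
  define c where "c = (\<lambda>p. dualf Q m M p q)"
  have cs: "cspec Q M q c" unfolding c_def by (rule dualf_cspec[OF mb q])
  define E where "E = (\<lambda>z. fst z = fst q \<and> ptgt Q z = ptgt Q q)"
  define c' where "c' = (\<lambda>p. if E p then c p else 0)"
  have "(\<lambda>z. if fst z = fst q \<and> ptgt Q z = ptgt Q q then ebasis q z - lincomb M c z else 0) \<in> ideal_of Q"
    using cs unfolding cspec_def by (intro ideal_restrict_ends[OF bq_rfs[OF bq]]) auto
  moreover have "(\<lambda>z. if fst z = fst q \<and> ptgt Q z = ptgt Q q then ebasis q z - lincomb M c z else 0)
      = (\<lambda>z. ebasis q z - lincomb M c' z)"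
    unfolding lincomb_apply[OF finM] c'_def E_def by (rule ext) (auto simp: ebasis_def)
  ultimately have "cspec Q M q c'" using cs unfolding cspec_def c'_def by auto
  then have "c' = c" using cspec_unique[OF mb _ cs] by blast
  then have "c' p \<noteq> 0" using nz unfolding c_def by simp
  then show ?thesis unfolding c'_def E_def by (auto split: if_splits)
qed

lemma plen_pcomp: "plen (pcomp q p) = plen q + plen p"
  by (simp add: plen_def pcomp_simp)

lemma dualf_kill:
  assumes mb: "is_mbasis Q m M" and bq: "bound_quiver Q"
  shows "a \<in> ideal_of Q \<Longrightarrow> ev (dualf Q m M p) a = 0"
proof (rule ideal_kill[OF bq_rfs[OF bq]])
  fix r x y assume r: "r \<in> rels Q" and x: "is_path Q x" and y: "is_path Q y"
  define b where "b = mul3 Q x r y"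
  have bI: "b \<in> ideal_of Q" unfolding b_def using r x y by (rule ideal_of.gen)
  have rel: "is_relation Q r" using bq r unfolding bound_quiver_def by blast
  have fb: "fs b" using ideal_fs[OF bq_rfs[OF bq] bI] .
  have props: "is_path Q z \<and> (\<forall>z'. b z' \<noteq> 0 \<longrightarrow> plen z' = plen z)" if bz: "b z \<noteq> 0" for z
  proof -
    obtain w where w: "r w \<noteq> 0" "fst w = ptgt Q y" "ptgt Q w = fst x" "z = pcomp x (pcomp w y)"
      using supp_mul3[of Q x r y z] bz unfolding b_def by blast
    have pw: "is_path Q w" using rel w unfolding is_relation_def by blast
    have "is_path Q (pcomp w y)" using pw y w by (intro is_path_pcomp) auto
    moreover have "ptgt Q (pcomp w y) = fst x" using w by (subst ptgt_pcomp) auto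
    ultimately have pz: "is_path Q z" using x w by (simp add: is_path_pcomp)
    have "plen z' = plen z" if bz': "b z' \<noteq> 0" for z'
    proof -
      obtain w' where w': "r w' \<noteq> 0" "z' = pcomp x (pcomp w' y)"
        using supp_mul3[of Q x r y z'] bz' unfolding b_def by blast
      have "plen w' = plen w" using rel w(1) w'(1) unfolding is_relation_def by blast
      then show ?thesis using w w' by (simp add: plen_pcomp)
    qed
    then show ?thesis using pz by blast
  qed
  show "ev (dualf Q m M p) (mul3 Q x r y) = 0"
  proof (cases "\<exists>z0. b z0 \<noteq> 0 \<and> plen z0 = m")
    case False
    have "dualf Q m M p z = 0" if "b z \<noteq> 0" for z
      using False that dualf_nz by blast
    then show ?thesis unfolding b_def[symmetric] ev_def by simp
  next
    case True
    then obtain z0 where z0: "b z0 \<noteq> 0" "plen z0 = m" by blast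
    have zm: "is_path Q z \<and> plen z = m" if "b z \<noteq> 0" for z
      using props[OF that] props[OF z0(1)] z0 that by metis
    show ?thesis
    proof (cases "p \<in> M")
      case True
      have indep: "\<forall>c. lincomb M c \<in> ideal_of Q \<longrightarrow> (\<forall>p\<in>M. c p = 0)" and finM: "finite M"
        using mb unfolding is_mbasis_def by blast+
      have "\<forall>p\<in>M. (\<Sum>z\<in>{z. b z \<noteq> 0}. b z * dualf Q m M p z) = 0"
      proof (rule coord_kill[OF indep finM bI fb order_refl])
        fix z assume "z \<in> {z. b z \<noteq> 0}"
        then have "cspec Q M z (\<lambda>p. dualf Q m M p z)" using zm dualf_cspec[OF mb] by blast
        then show "(\<lambda>u. ebasis z u - lincomb M (\<lambda>p. dualf Q m M p z) u) \<in> ideal_of Q"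
          unfolding cspec_def by blast
      qed
      then show ?thesis using True unfolding b_def[symmetric] ev_def by blast
    next
      case False
      have "dualf Q m M p z = 0" if "b z \<noteq> 0" for z
        using dualf_cspec[OF mb, of z] zm[OF that] False unfolding cspec_def by blast
      then show ?thesis unfolding b_def[symmetric] ev_def by simp
    qed
  qed
qed


fun isG :: "('v,'a) arr \<Rightarrow> bool" where
  "isG (Gam i r) = True" | "isG _ = False"
fun isB :: "('v,'a) arr \<Rightarrow> bool" where
  "isB (Beta s as) = True" | "isB _ = False"
definition ng :: "('v,'a) arr list \<Rightarrow> nat" where "ng L = length (filter isG L)"
definition nb :: "('v,'a) arr list \<Rightarrow> nat" where "nb L = length (filter isB L)"
fun stripa :: "('v,'a) arr \<Rightarrow> ('v,'a) arr list" where
  "stripa (ACopy \<alpha> r) = [\<alpha>]" | "stripa _ = []"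
definition strip :: "('v,'a) arr list \<Rightarrow> ('v,'a) arr list" where "strip L = concat (map stripa L)"
fun base :: "'v vert \<Rightarrow> 'v vert" where
  "base (Lay i r) = i" | "base (BaseV v) = BaseV v"
fun fl :: "'v vert \<Rightarrow> nat" where
  "fl (Lay i r) = r" | "fl (BaseV v) = 0"
definition cl :: "nat \<Rightarrow> ('v,'a) arr list \<Rightarrow> ('v,'a) arr list" where
  "cl r w = map (\<lambda>\<alpha>. ACopy \<alpha> r) w"
fun decb :: "('v,'a) arr list \<Rightarrow> ('v,'a) arr list \<times> 'v vert \<times> ('v,'a) arr list \<times> ('v,'a) arr list" where
  "decb [] = ([], undefined, [], [])"
| "decb (Beta s as # L) = ([], s, as, strip L)"
| "decb (a # L) = (case decb L of (X, s, as, Y) \<Rightarrow> (stripa a @ X, s, as, Y))"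

lemma ng_simps[simp]: "ng [] = 0" "ng (a # L) = (if isG a then Suc (ng L) else ng L)" "ng (A @ B) = ng A + ng B"
  by (auto simp: ng_def)
lemma nb_simps[simp]: "nb [] = 0" "nb (a # L) = (if isB a then Suc (nb L) else nb L)" "nb (A @ B) = nb A + nb B"
  by (auto simp: nb_def)
lemma strip_simps[simp]: "strip [] = []" "strip (a # L) = stripa a @ strip L" "strip (A @ B) = strip A @ strip B"
  by (auto simp: strip_def)
lemma cl_simps[simp]: "cl r [] = []" "cl r (a # L) = ACopy a r # cl r L" "cl r (A @ B) = cl r A @ cl r B"
  by (auto simp: cl_def)
lemma cl_props[simp]: "strip (cl r w) = w" "ng (cl r w) = 0" "nb (cl r w) = 0"
  by (induction w) auto
lemma cl_length[simp]: "length (cl r w) = length w" by (simp add: cl_def)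
lemma cl_inj: "cl r A = cl r B \<Longrightarrow> A = B"
proof (induction A arbitrary: B)
  case Nil then show ?case by (cases B) auto
next
  case (Cons a A) then show ?case by (cases B) auto
qed

lemma decb_bpath: "decb (cl a X @ Beta s as # cl b Y) = (X, s, as, Y)"
  by (induction X) auto

lemma pcopy_eq: "pcopy r p = (Lay (fst p) r, cl r (snd p))"
  by (simp add: pcopy_def cl_def)

lemma bpath_eq: "bpath m (x, p, y) = (Lay (fst y) 0, cl (Suc m) (snd x) @ Beta (fst p) (snd p) # cl 0 (snd y))"
  by (simp add: bpath_def cl_def)

definition eqv :: "('V,'A,'k::field) bquiver \<Rightarrow> 'V \<times> 'A list \<Rightarrow> 'V \<times> 'A list \<Rightarrow> bool" where
  "eqv Q P P' \<longleftrightarrow> (\<lambda>z. ebasis P z - ebasis P' z :: 'k) \<in> ideal_of Q"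

lemma eqv_refl: "eqv Q P P" unfolding eqv_def by (simp add: ideal_of.zero)

lemma eqv_trans: "eqv Q P P' \<Longrightarrow> eqv Q P' P'' \<Longrightarrow> eqv Q P P''"
  unfolding eqv_def by (drule (1) ideal_of.add) simp

lemma eqv_mem: "eqv Q P P' \<Longrightarrow> ebasis P' \<in> ideal_of Q \<Longrightarrow> ebasis P \<in> ideal_of Q"
  unfolding eqv_def by (drule (1) ideal_of.add) simp

lemma fs_ebasis: "fs (ebasis u :: _ \<Rightarrow> 'k::field)"
proof -
  have "{w. (ebasis u w :: 'k) \<noteq> 0} \<subseteq> {u}" by (auto simp: ebasis_def)
  then show ?thesis by (rule finite_subset) simp
qed

lemma arrow_path: "a \<in> arrs Q \<Longrightarrow> src Q a \<in> verts Q \<Longrightarrow> is_path Q (src Q a, [a])"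
  by (simp add: is_path_Cons)

lemma eqv_left:
  assumes "rfs Q" "eqv Q P P'" "fst P = fst P'" "ptgt Q P = src Q a" "ptgt Q P' = src Q a"
    "a \<in> arrs Q" "src Q a \<in> verts Q" "fst P \<in> verts Q"
  shows "eqv Q (fst P, a # snd P) (fst P', a # snd P')"
proof -
  let ?X = "(src Q a, [a])" and ?Y = "(fst P, [])"
  have "mul3 Q ?X (\<lambda>z. ebasis P z - ebasis P' z) ?Y \<in> ideal_of Q"
    using assms by (intro mul3_closed arrow_path) (auto simp: eqv_def)
  moreover have "mul3 Q ?X (\<lambda>z. ebasis P z - ebasis P' z) ?Y = (\<lambda>z. ebasis (fst P, a # snd P) z - ebasis (fst P', a # snd P') z)"
    using assms by (simp add: mul3_diff fs_ebasis mul3_ebasis pcomp_simp)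
  ultimately show ?thesis unfolding eqv_def by simp
qed

lemma mem_left:
  assumes "rfs Q" "ebasis P \<in> ideal_of Q" "ptgt Q P = src Q a"
    "a \<in> arrs Q" "src Q a \<in> verts Q" "fst P \<in> verts Q"
  shows "ebasis (fst P, a # snd P) \<in> ideal_of Q"
proof -
  let ?X = "(src Q a, [a])" and ?Y = "(fst P, [])"
  have "mul3 Q ?X (ebasis P) ?Y \<in> ideal_of Q"
    using assms by (intro mul3_closed arrow_path) auto
  moreover have "mul3 Q ?X (ebasis P) ?Y = ebasis (fst P, a # snd P)"
    using assms by (simp add: mul3_ebasis pcomp_simp)
  ultimately show ?thesis by simp
qed

section \<open>The multilayer quiver\<close>

locale mlq =
  fixes Q :: "('v,'a,'k::field) uquiver" and m :: nat and M :: "('v vert \<times> ('v,'a) arr list) set"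
  assumes fin: "finite_bq Q" and ngd: "m_nicely_graded m Q" and mb: "is_mbasis Q m M"
begin

abbreviation "Qh \<equiv> multilayer Q m M"

lemma ngQ: "nicely_graded Q" using ngd unfolding m_nicely_graded_def by blast
lemma bqQ: "bound_quiver Q" using ngQ unfolding nicely_graded_def by blast
lemma rfsQ: "rfs Q" by (rule bq_rfs[OF bqQ])
lemma finM: "finite M" using mb unfolding is_mbasis_def by blast
lemma Mpath: "p \<in> M \<Longrightarrow> is_path Q p \<and> plen p = m" by (rule mbasis_paths[OF mb])

lemma Qh_verts: "verts Qh = {Lay i r | i r. i \<in> verts Q \<and> r \<le> Suc m}"
  by (simp add: multilayer_def ml_base_def)
lemma Qh_arrs: "arrs Qh = {ACopy \<alpha> r | \<alpha> r. \<alpha> \<in> arrs Q \<and> r \<le> Suc m}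
          \<union> {Gam i r | i r. i \<in> verts Q \<and> r \<le> m}
          \<union> {Beta (fst p) (snd p) | p. p \<in> M}"
  by (simp add: multilayer_def ml_base_def)
lemma Qh_src[simp]: "src Qh = msrc Q" by (simp add: multilayer_def ml_base_def)
lemma Qh_tgt[simp]: "tgt Qh = mtgt Q m" by (simp add: multilayer_def ml_base_def)
lemma Lay_in[simp]: "Lay i r \<in> verts Qh \<longleftrightarrow> i \<in> verts Q \<and> r \<le> Suc m" by (simp add: Qh_verts)
lemma BaseV_in[simp]: "BaseV v \<notin> verts Qh" by (simp add: Qh_verts)
lemma ACopy_in[simp]: "ACopy \<alpha> r \<in> arrs Qh \<longleftrightarrow> \<alpha> \<in> arrs Q \<and> r \<le> Suc m" by (auto simp: Qh_arrs)
lemma Gam_in[simp]: "Gam i r \<in> arrs Qh \<longleftrightarrow> i \<in> verts Q \<and> r \<le> m" by (auto simp: Qh_arrs)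
lemma Beta_in[simp]: "Beta s as \<in> arrs Qh \<longleftrightarrow> (s, as) \<in> M" by (auto simp: Qh_arrs)
lemma BaseA_in[simp]: "BaseA a \<notin> arrs Qh" by (auto simp: Qh_arrs)

lemma Qh_rels: "rels Qh = {pushf (pcopy r) \<rho> | \<rho> r. \<rho> \<in> rels Q \<and> r \<le> Suc m}
      \<union> {ebasis (Lay i r, [Gam i (Suc r), Gam i r]) | i r. i \<in> verts Q \<and> r < m}
      \<union> {(\<lambda>z. ebasis (Lay (src Q \<alpha>) r, [ACopy \<alpha> (Suc r), Gam (src Q \<alpha>) r]) z
              - ebasis (Lay (src Q \<alpha>) r, [Gam (tgt Q \<alpha>) r, ACopy \<alpha> r]) z)
          | \<alpha> r. \<alpha> \<in> arrs Q \<and> r \<le> m}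
      \<union> rho_M Q m M"
  by (simp add: multilayer_def)

lemma is_path_ml: "is_path (ml_base Q m M) = is_path Qh"
  by (rule ext) (simp add: is_path_def multilayer_def)
lemma ptgt_ml: "ptgt (ml_base Q m M) = ptgt Qh"
  by (rule ext) (simp add: ptgt_def multilayer_def)
lemma is_relation_ml: "is_relation (ml_base Q m M) = is_relation Qh"
  by (rule ext) (simp add: is_relation_def is_path_ml ptgt_ml)

lemma path_Lay: "is_path Qh (v, L) \<Longrightarrow> \<exists>i r. v = Lay i r \<and> i \<in> verts Q \<and> r \<le> Suc m"
  by (cases v) (auto simp: is_path_def)

lemma pcopy_path: "is_path Q (v, L) \<Longrightarrow> r \<le> Suc m \<Longrightarrow> is_path Qh (pcopy r (v, L))"
proof (induction L)
  case Nil then show ?case by (simp add: pcopy_eq is_path_def)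
next
  case (Cons a L)
  then show ?case by (cases L) (auto simp: pcopy_eq is_path_Cons)
qed

lemma ptgt_pcopy: "ptgt Qh (pcopy r p) = Lay (ptgt Q p) r"
  by (cases p; cases "snd p") (auto simp: pcopy_eq ptgt_def cl_def)

lemma pcopy_pcomp: "pcopy r (pcomp q p) = pcomp (pcopy r q) (pcopy r p)"
  by (simp add: pcopy_eq pcomp_simp)

lemma plen_pcopy: "plen (pcopy r p) = plen p" by (simp add: pcopy_eq plen_def)

lemma pcopy_inj: "pcopy r p = pcopy r q \<Longrightarrow> p = q"
  by (cases p, cases q) (auto simp: pcopy_eq dest: cl_inj)

lemma lemA:
  "is_path Qh (Lay i r, L) \<Longrightarrow> nb L = 0 \<Longrightarrow>
     is_path Q (i, strip L) \<and> ptgt Qh (Lay i r, L) = Lay (ptgt Q (i, strip L)) (r + ng L)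
     \<and> (ng L = 0 \<longrightarrow> L = cl r (strip L))"
proof (induction L)
  case Nil then show ?case by simp
next
  case (Cons a L)
  have pL: "is_path Qh (Lay i r, L)" and aA: "a \<in> arrs Qh" and sa: "msrc Q a = ptgt Qh (Lay i r, L)"
    using Cons.prems(1) by (auto simp: is_path_Cons)
  have nbL: "nb L = 0" and nbB: "\<not> isB a" using Cons.prems(2) by (auto split: if_splits)
  have IH: "is_path Q (i, strip L)" "ptgt Qh (Lay i r, L) = Lay (ptgt Q (i, strip L)) (r + ng L)"
      "ng L = 0 \<longrightarrow> L = cl r (strip L)"
    using Cons.IH[OF pL nbL] by auto
  show ?case
  proof (cases a)
    case (BaseA x) then show ?thesis using aA by simp
  next
    case (ACopy \<alpha> s)
    then have \<alpha>: "\<alpha> \<in> arrs Q" using aA by simp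
    have "Lay (src Q \<alpha>) s = Lay (ptgt Q (i, strip L)) (r + ng L)" using sa IH(2) ACopy by simp
    then have e: "src Q \<alpha> = ptgt Q (i, strip L)" "s = r + ng L" by auto
    have "is_path Q (i, \<alpha> # strip L)" using IH(1) \<alpha> e by (simp add: is_path_Cons)
    then show ?thesis using ACopy IH e by auto
  next
    case (Gam k s)
    have "Lay k s = Lay (ptgt Q (i, strip L)) (r + ng L)" using sa IH(2) Gam by simp
    then have e: "k = ptgt Q (i, strip L)" "s = r + ng L" by auto
    then show ?thesis using Gam IH by auto
  next
    case (Beta s as) then show ?thesis using nbB by simp
  qed
qed

lemma lemB:
  "is_path Qh (Lay i r, L) \<Longrightarrow> nb L \<noteq> 0 \<Longrightarrow>
     \<exists>X s as Y. L = cl (Suc m) X @ Beta s as # cl 0 Y \<and> (s, as) \<in> M \<and> r = 0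
       \<and> is_path Q (i, Y) \<and> ptgt Q (i, Y) = ptgt Q (s, as) \<and> is_path Q (s, X)
       \<and> ptgt Qh (Lay i r, L) = Lay (ptgt Q (s, X)) (Suc m)"
proof (induction L)
  case Nil then show ?case by simp
next
  case (Cons a L)
  have pL: "is_path Qh (Lay i r, L)" and aA: "a \<in> arrs Qh" and sa: "msrc Q a = ptgt Qh (Lay i r, L)"
    using Cons.prems(1) by (auto simp: is_path_Cons)
  show ?case
  proof (cases "nb L = 0")
    case True
    then have "isB a" using Cons.prems(2) by (auto split: if_splits)
    then obtain s as where a: "a = Beta s as" by (cases a) auto
    have sM: "(s, as) \<in> M" using aA a by simp
    have A: "is_path Q (i, strip L)" "ptgt Qh (Lay i r, L) = Lay (ptgt Q (i, strip L)) (r + ng L)"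
      "ng L = 0 \<longrightarrow> L = cl r (strip L)" using lemA[OF pL True] by auto
    have "Lay (ptgt Q (s, as)) 0 = Lay (ptgt Q (i, strip L)) (r + ng L)" using sa A(2) a by simp
    then have e: "ptgt Q (s, as) = ptgt Q (i, strip L)" "r = 0" "ng L = 0" by auto
    have L: "L = cl 0 (strip L)" using A(3) e by simp
    have sv: "s \<in> verts Q" using Mpath[OF sM] by (simp add: is_path_def)
    show ?thesis
      apply (rule exI[of _ "[]"], rule exI[of _ s], rule exI[of _ as], rule exI[of _ "strip L"])
      using a sM e A L sv by simp
  next
    case False
    obtain X s as Y where IH: "L = cl (Suc m) X @ Beta s as # cl 0 Y" "(s, as) \<in> M" "r = 0"
       "is_path Q (i, Y)" "ptgt Q (i, Y) = ptgt Q (s, as)" "is_path Q (s, X)"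
       "ptgt Qh (Lay i r, L) = Lay (ptgt Q (s, X)) (Suc m)"
      using Cons.IH[OF pL False] by blast
    show ?thesis
    proof (cases a)
      case (BaseA x) then show ?thesis using aA by simp
    next
      case (ACopy \<alpha> t)
      then have \<alpha>: "\<alpha> \<in> arrs Q" using aA by simp
      have "Lay (src Q \<alpha>) t = Lay (ptgt Q (s, X)) (Suc m)" using sa IH(7) ACopy by simp
      then have e: "src Q \<alpha> = ptgt Q (s, X)" "t = Suc m" by auto
      have "is_path Q (s, \<alpha> # X)" using IH(6) \<alpha> e by (simp add: is_path_Cons)
      then show ?thesis
        apply (rule_tac exI[of _ "\<alpha> # X"], rule_tac exI[of _ s], rule_tac exI[of _ as], rule_tac exI[of _ Y])
        using ACopy IH e by simp
    next
      case (Gam k t)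
      then have "t \<le> m" using aA by simp
      moreover have "Lay k t = Lay (ptgt Q (s, X)) (Suc m)" using sa IH(7) Gam by simp
      ultimately show ?thesis by simp
    next
      case (Beta s' as')
      have "Lay (ptgt Q (s', as')) 0 = Lay (ptgt Q (s, X)) (Suc m)" using sa IH(7) Beta by simp
      then show ?thesis by simp
    qed
  qed
qed

lemma length_decomp: "set L \<subseteq> arrs Qh \<Longrightarrow> length L = length (strip L) + ng L + nb L"
proof (induction L)
  case Nil then show ?case by simp
next
  case (Cons a L) then show ?case by (cases a) auto
qed

end


context mlq
begin

lemma rel_copy:
  assumes \<rho>: "\<rho> \<in> rels Q" and r: "r \<le> Suc m"
  shows "is_relation Qh (pushf (pcopy r) \<rho>)"
proof -
  have rel: "is_relation Q \<rho>" using bqQ \<rho> unfolding bound_quiver_def by blast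
  have f\<rho>: "fs \<rho>" using rel unfolding is_relation_def by blast
  have supp: "\<exists>w0. \<rho> w0 \<noteq> 0 \<and> w = pcopy r w0" if "pushf (pcopy r) \<rho> w \<noteq> 0" for w
  proof -
    have "w \<in> pcopy r ` {w. \<rho> w \<noteq> 0}" using subsetD[OF supp_pushf[of "pcopy r" \<rho>]] that by simp
    then show ?thesis by auto
  qed
  have P1: "is_path Qh w \<and> 2 \<le> plen w" if nz: "pushf (pcopy r) \<rho> w \<noteq> 0" for w
  proof -
    obtain w0 where w0: "\<rho> w0 \<noteq> 0" "w = pcopy r w0" using supp[OF nz] by blast
    have "is_path Q w0" "2 \<le> plen w0" using rel w0(1) unfolding is_relation_def by blast+
    then show ?thesis using w0 pcopy_path[of "fst w0" "snd w0" r] r by (simp add: plen_pcopy)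
  qed
  have P2: "fst w = fst w' \<and> ptgt Qh w = ptgt Qh w' \<and> plen w = plen w'"
    if nz: "pushf (pcopy r) \<rho> w \<noteq> 0" "pushf (pcopy r) \<rho> w' \<noteq> 0" for w w'
  proof -
    obtain w0 where w0: "\<rho> w0 \<noteq> 0" "w = pcopy r w0" using supp[OF nz(1)] by blast
    obtain w0' where w0': "\<rho> w0' \<noteq> 0" "w' = pcopy r w0'" using supp[OF nz(2)] by blast
    have "fst w0 = fst w0' \<and> ptgt Q w0 = ptgt Q w0' \<and> plen w0 = plen w0'"
      using rel w0 w0' unfolding is_relation_def by blast
    then show ?thesis using w0 w0' by (simp only: ptgt_pcopy plen_pcopy, simp add: pcopy_eq)
  qed
  show ?thesis unfolding is_relation_def using fs_pushf[OF f\<rho>] P1 P2 by blast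
qed

lemma rel_single:
  assumes "is_path Qh u" "2 \<le> plen u"
  shows "is_relation Qh (ebasis u :: _ \<Rightarrow> 'k)"
  unfolding is_relation_def using assms fs_ebasis[of u] by (auto simp: ebasis_def)

lemma rel_gg:
  assumes "i \<in> verts Q" "r < m"
  shows "is_relation Qh (ebasis (Lay i r, [Gam i (Suc r), Gam i r]) :: _ \<Rightarrow> 'k)"
  by (rule rel_single) (use assms in \<open>auto simp: is_path_Cons plen_def\<close>)

lemma rel_comm:
  assumes \<alpha>: "\<alpha> \<in> arrs Q" and r: "r \<le> m"
  shows "is_relation Qh (\<lambda>z. ebasis (Lay (src Q \<alpha>) r, [ACopy \<alpha> (Suc r), Gam (src Q \<alpha>) r]) z
              - ebasis (Lay (src Q \<alpha>) r, [Gam (tgt Q \<alpha>) r, ACopy \<alpha> r]) z :: 'k)"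
proof -
  let ?u1 = "(Lay (src Q \<alpha>) r, [ACopy \<alpha> (Suc r), Gam (src Q \<alpha>) r])"
  let ?u2 = "(Lay (src Q \<alpha>) r, [Gam (tgt Q \<alpha>) r, ACopy \<alpha> r])"
  have sv: "src Q \<alpha> \<in> verts Q" "tgt Q \<alpha> \<in> verts Q" using bqQ \<alpha> unfolding bound_quiver_def by auto
  have p1: "is_path Qh ?u1" "is_path Qh ?u2" using sv \<alpha> r by (auto simp: is_path_Cons)
  have sub: "{w. (ebasis ?u1 w - ebasis ?u2 w :: 'k) \<noteq> 0} \<subseteq> {?u1, ?u2}" by (auto simp: ebasis_def)
  have fin: "fs (\<lambda>w. ebasis ?u1 w - ebasis ?u2 w :: 'k)" by (rule finite_subset[OF sub]) simp
  have A: "is_path Qh w \<and> 2 \<le> plen w" if "(ebasis ?u1 w - ebasis ?u2 w :: 'k) \<noteq> 0" for w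
  proof -
    have "w = ?u1 \<or> w = ?u2" using sub that by blast
    then show ?thesis using p1 by (elim disjE) (simp_all add: plen_def)
  qed
  have B: "fst w = fst w' \<and> ptgt Qh w = ptgt Qh w' \<and> plen w = plen w'"
    if "(ebasis ?u1 w - ebasis ?u2 w :: 'k) \<noteq> 0" "(ebasis ?u1 w' - ebasis ?u2 w' :: 'k) \<noteq> 0" for w w'
  proof -
    have "w = ?u1 \<or> w = ?u2" "w' = ?u1 \<or> w' = ?u2" using sub that by blast+
    then show ?thesis by (elim disjE) (simp_all add: plen_def)
  qed
  show ?thesis unfolding is_relation_def
    using fin A B by blast
qed

lemma bqQh: "bound_quiver Qh"
proof -
  have arr: "msrc Q \<alpha> \<in> verts Qh \<and> mtgt Q m \<alpha> \<in> verts Qh" if "\<alpha> \<in> arrs Qh" for \<alpha>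
  proof (cases \<alpha>)
    case (BaseA x) then show ?thesis using that by simp
  next
    case (ACopy \<beta> r) then show ?thesis using that bqQ unfolding bound_quiver_def by auto
  next
    case (Gam i r) then show ?thesis using that by simp
  next
    case (Beta s as)
    then have sM: "(s, as) \<in> M" using that by simp
    have "is_path Q (s, as)" using Mpath[OF sM] by simp
    then have "ptgt Q (s, as) \<in> verts Q" "s \<in> verts Q" using ptgt_in_verts[OF bqQ] by (auto simp: is_path_def)
    then show ?thesis using Beta by simp
  qed
  have rel: "is_relation Qh \<rho>" if "\<rho> \<in> rels Qh" for \<rho>
    using that unfolding Qh_rels
  proof (elim UnE)
    assume "\<rho> \<in> {pushf (pcopy r) \<rho> | \<rho> r. \<rho> \<in> rels Q \<and> r \<le> Suc m}"
    then show ?thesis using rel_copy by blast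
  next
    assume "\<rho> \<in> {ebasis (Lay i r, [Gam i (Suc r), Gam i r]) | i r. i \<in> verts Q \<and> r < m}"
    then show ?thesis using rel_gg by blast
  next
    assume "\<rho> \<in> {(\<lambda>z. ebasis (Lay (src Q \<alpha>) r, [ACopy \<alpha> (Suc r), Gam (src Q \<alpha>) r]) z
              - ebasis (Lay (src Q \<alpha>) r, [Gam (tgt Q \<alpha>) r, ACopy \<alpha> r]) z) | \<alpha> r. \<alpha> \<in> arrs Q \<and> r \<le> m}"
    then show ?thesis using rel_comm by blast
  next
    assume "\<rho> \<in> rho_M Q m M"
    then show ?thesis unfolding rho_M_def is_relation_ml by blast
  qed
  show ?thesis unfolding bound_quiver_def using arr rel by simp
qed

lemma rfsQh: "rfs Qh" by (rule bq_rfs[OF bqQh])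

lemma finQh: "finite_bq Qh"
proof -
  have "verts Qh = (\<lambda>(i, r). Lay i r) ` (verts Q \<times> {..Suc m})" unfolding Qh_verts by force
  then have fv: "finite (verts Qh)" using fin unfolding finite_bq_def by simp
  have e1: "{ACopy \<alpha> r | \<alpha> r. \<alpha> \<in> arrs Q \<and> r \<le> Suc m} = (\<lambda>(\<alpha>, r). ACopy \<alpha> r) ` (arrs Q \<times> {..Suc m})"
    by force
  have e2: "{Gam i r | i r. i \<in> verts Q \<and> r \<le> m} = (\<lambda>(i, r). Gam i r) ` (verts Q \<times> {..m})"
    by force
  have e3: "{Beta (fst p) (snd p) | p. p \<in> M} = (\<lambda>p. Beta (fst p) (snd p)) ` M"
    by force
  have "arrs Qh = (\<lambda>(\<alpha>, r). ACopy \<alpha> r) ` (arrs Q \<times> {..Suc m}) \<union> (\<lambda>(i, r). Gam i r) ` (verts Q \<times> {..m})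
      \<union> (\<lambda>p. Beta (fst p) (snd p)) ` M" unfolding Qh_arrs e1 e2 e3 ..
  then have fa: "finite (arrs Qh)" using fin finM unfolding finite_bq_def by simp
  show ?thesis unfolding finite_bq_def using fv fa by simp
qed

lemma ngQh: "nicely_graded Qh"
proof -
  obtain u :: "_ \<Rightarrow> int" where u: "\<forall>\<alpha>\<in>arrs Q. u (tgt Q \<alpha>) = u (src Q \<alpha>) + 1"
    using ngQ unfolding nicely_graded_def by blast
  define u' where "u' = (\<lambda>v. case v of Lay i r \<Rightarrow> u i + int r | BaseV _ \<Rightarrow> 0)"
  have "u' (mtgt Q m \<alpha>) = u' (msrc Q \<alpha>) + 1" if "\<alpha> \<in> arrs Qh" for \<alpha>
  proof (cases \<alpha>)
    case (BaseA x) then show ?thesis using that by simp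
  next
    case (ACopy \<beta> r) then show ?thesis using that u unfolding u'_def by auto
  next
    case (Gam i r) then show ?thesis unfolding u'_def by simp
  next
    case (Beta s as)
    then have sM: "(s, as) \<in> M" using that by simp
    have "is_path Q (s, as)" "length as = m" using Mpath[OF sM] by (auto simp: plen_def)
    then have "u (ptgt Q (s, as)) = u s + int m" using path_grade[OF u] by simp
    then show ?thesis using Beta unfolding u'_def by simp
  qed
  then show ?thesis unfolding nicely_graded_def using bqQh by auto
qed

lemma pushf_copy_mul3:
  assumes f\<rho>: "fs \<rho>"
  shows "pushf (pcopy s) (mul3 Q x \<rho> y) = mul3 Qh (pcopy s x) (pushf (pcopy s) \<rho>) (pcopy s y)"
proof -
  define \<rho>1 where "\<rho>1 = (\<lambda>w. if fst w = ptgt Q y \<and> ptgt Q w = fst x then \<rho> w else 0)"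
  have f1: "fs \<rho>1" unfolding \<rho>1_def by (rule fs_restrict[OF f\<rho>])
  have "pushf (pcopy s) (mul3 Q x \<rho> y) = pushf (\<lambda>w. pcopy s (pcomp x (pcomp w y))) \<rho>1"
    unfolding mul3_pushf \<rho>1_def[symmetric] by (rule pushf_pushf[OF f1])
  also have "\<dots> = pushf (\<lambda>w. pcomp (pcopy s x) (pcomp (pcopy s w) (pcopy s y))) \<rho>1"
    by (simp add: pcopy_pcomp)
  also have "\<rho>1 = (\<lambda>w. if fst (pcopy s w) = ptgt Qh (pcopy s y) \<and> ptgt Qh (pcopy s w) = fst (pcopy s x) then \<rho> w else 0)"
    unfolding \<rho>1_def by (rule ext) (simp only: ptgt_pcopy, simp add: pcopy_eq)
  also have "pushf (\<lambda>w. pcomp (pcopy s x) (pcomp (pcopy s w) (pcopy s y))) \<dots>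
      = pushf (\<lambda>z. pcomp (pcopy s x) (pcomp z (pcopy s y)))
          (pushf (pcopy s) (\<lambda>w. if fst (pcopy s w) = ptgt Qh (pcopy s y) \<and> ptgt Qh (pcopy s w) = fst (pcopy s x) then \<rho> w else 0))"
    by (rule pushf_pushf[symmetric]) (rule fs_restrict[OF f\<rho>])
  also have "\<dots> = pushf (\<lambda>z. pcomp (pcopy s x) (pcomp z (pcopy s y)))
          (\<lambda>z. if fst z = ptgt Qh (pcopy s y) \<and> ptgt Qh z = fst (pcopy s x) then pushf (pcopy s) \<rho> z else 0)"
    by (subst pushf_restrict) simp
  also have "\<dots> = mul3 Qh (pcopy s x) (pushf (pcopy s) \<rho>) (pcopy s y)"
    by (rule mul3_pushf[symmetric])
  finally show ?thesis .
qed

lemma transfer: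
  assumes r: "r \<le> Suc m"
  shows "a \<in> ideal_of Q \<Longrightarrow> pushf (pcopy r) a \<in> ideal_of Qh"
proof (induction a rule: ideal_of.induct)
  case zero then show ?case by (simp add: pushf_zero ideal_of.zero)
next
  case (gen \<rho> x y)
  have f\<rho>: "fs \<rho>" using gen rfsQ unfolding rfs_def by blast
  have "pushf (pcopy r) \<rho> \<in> rels Qh" unfolding Qh_rels using gen r by blast
  moreover have "is_path Qh (pcopy r x)" "is_path Qh (pcopy r y)"
    using gen r pcopy_path[of "fst x" "snd x" r] pcopy_path[of "fst y" "snd y" r] by auto
  ultimately have "mul3 Qh (pcopy r x) (pushf (pcopy r) \<rho>) (pcopy r y) \<in> ideal_of Qh"
    by (rule ideal_of.gen)
  then show ?case by (simp add: pushf_copy_mul3[OF f\<rho>])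
next
  case (add a b)
  then show ?case using ideal_fs[OF rfsQ] by (simp add: pushf_add ideal_of.add)
next
  case (smult a c)
  then show ?case using ideal_fs[OF rfsQ] by (simp add: pushf_smult ideal_of.smult)
qed

lemma transfer_path:
  assumes "ebasis w \<in> ideal_of Q" "r \<le> Suc m"
  shows "ebasis (pcopy r w) \<in> ideal_of Qh"
  using transfer[OF assms(2) assms(1)] by (simp add: pushf_ebasis)

lemma comm_step:
  assumes Y: "is_path Qh Y" "ptgt Qh Y = Lay (src Q \<alpha>) r" and \<alpha>: "\<alpha> \<in> arrs Q" and r: "r \<le> m"
  shows "eqv Qh (fst Y, ACopy \<alpha> (Suc r) # Gam (src Q \<alpha>) r # snd Y) (fst Y, Gam (tgt Q \<alpha>) r # ACopy \<alpha> r # snd Y)"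
proof -
  let ?u1 = "(Lay (src Q \<alpha>) r, [ACopy \<alpha> (Suc r), Gam (src Q \<alpha>) r])"
  let ?u2 = "(Lay (src Q \<alpha>) r, [Gam (tgt Q \<alpha>) r, ACopy \<alpha> r])"
  let ?\<rho> = "\<lambda>z. ebasis ?u1 z - ebasis ?u2 z :: 'k"
  let ?X = "(Lay (tgt Q \<alpha>) (Suc r), [])"
  have tv: "tgt Q \<alpha> \<in> verts Q" using bqQ \<alpha> unfolding bound_quiver_def by auto
  have "?\<rho> \<in> rels Qh" unfolding Qh_rels using \<alpha> r by blast
  moreover have "is_path Qh ?X" using tv r by simp
  ultimately have "mul3 Qh ?X ?\<rho> Y \<in> ideal_of Qh" using Y(1) by (rule ideal_of.gen)
  moreover have "mul3 Qh ?X ?\<rho> Y = (\<lambda>z. ebasis (fst Y, ACopy \<alpha> (Suc r) # Gam (src Q \<alpha>) r # snd Y) z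
       - ebasis (fst Y, Gam (tgt Q \<alpha>) r # ACopy \<alpha> r # snd Y) z)"
    using Y by (simp add: mul3_diff fs_ebasis mul3_ebasis pcomp_simp)
  ultimately show ?thesis unfolding eqv_def by simp
qed

lemma gg_step:
  assumes Y: "is_path Qh Y" "ptgt Qh Y = Lay k r" and k: "k \<in> verts Q" and r: "r < m"
  shows "ebasis (fst Y, Gam k (Suc r) # Gam k r # snd Y) \<in> ideal_of Qh"
proof -
  let ?u = "(Lay k r, [Gam k (Suc r), Gam k r])"
  let ?X = "(Lay k (Suc (Suc r)), [])"
  have "(ebasis ?u :: _ \<Rightarrow> 'k) \<in> rels Qh" unfolding Qh_rels using k r by blast
  moreover have "is_path Qh ?X" using k r by simp
  ultimately have "mul3 Qh ?X (ebasis ?u) Y \<in> ideal_of Qh" using Y(1) by (rule ideal_of.gen)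
  moreover have "mul3 Qh ?X (ebasis ?u) Y = ebasis (fst Y, Gam k (Suc r) # Gam k r # snd Y)"
    using Y by (simp add: mul3_ebasis pcomp_simp)
  ultimately show ?thesis by simp
qed

lemma lemC:
  "is_path Qh (Lay i r, L) \<Longrightarrow> nb L = 0 \<Longrightarrow>
    (ng L = 1 \<longrightarrow> eqv Qh (Lay i r, L) (Lay i r, Gam (ptgt Q (i, strip L)) r # cl r (strip L)))
    \<and> (2 \<le> ng L \<longrightarrow> ebasis (Lay i r, L) \<in> ideal_of Qh)"
proof (induction L)
  case Nil then show ?case by simp
next
  case (Cons a L)
  have pL: "is_path Qh (Lay i r, L)" and aA: "a \<in> arrs Qh" and sa: "msrc Q a = ptgt Qh (Lay i r, L)"
    using Cons.prems(1) by (auto simp: is_path_Cons)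
  have nbL: "nb L = 0" and nbB: "\<not> isB a" using Cons.prems(2) by (auto split: if_splits)
  define w where "w = strip L"
  define j where "j = ptgt Q (i, w)"
  have A: "is_path Q (i, w)" "ptgt Qh (Lay i r, L) = Lay j (r + ng L)" "ng L = 0 \<longrightarrow> L = cl r w"
    using lemA[OF pL nbL] unfolding w_def j_def by auto
  have IH: "ng L = 1 \<longrightarrow> eqv Qh (Lay i r, L) (Lay i r, Gam j r # cl r w)"
     "2 \<le> ng L \<longrightarrow> ebasis (Lay i r, L) \<in> ideal_of Qh"
    using Cons.IH[OF pL nbL] unfolding w_def j_def by auto
  have iv: "i \<in> verts Q" "r \<le> Suc m" using pL by (auto simp: is_path_def)
  have jv: "j \<in> verts Q" unfolding j_def using ptgt_in_verts[OF bqQ A(1)] .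
  have Ypath: "is_path Qh (Lay i r, cl r w)" using pcopy_path[OF A(1) iv(2)] by (simp add: pcopy_eq)
  have Yptgt: "ptgt Qh (Lay i r, cl r w) = Lay j r"
    using ptgt_pcopy[of r "(i, w)"] unfolding j_def by (simp add: pcopy_eq)
  have Cpath: "r \<le> m \<Longrightarrow> is_path Qh (Lay i r, Gam j r # cl r w)"
    using Ypath Yptgt jv by (simp add: is_path_Cons)
  show ?case
  proof (cases a)
    case (BaseA x) then show ?thesis using aA by simp
  next
    case (Beta s as) then show ?thesis using nbB by simp
  next
    case (ACopy \<alpha> s)
    have \<alpha>: "\<alpha> \<in> arrs Q" "s \<le> Suc m" using aA ACopy by auto
    have e: "src Q \<alpha> = j" "s = r + ng L" using sa A(2) ACopy by auto
    have sv: "Lay (src Q \<alpha>) s \<in> verts Qh" using e jv \<alpha> by simp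
    show ?thesis
    proof (cases "ng L = 1")
      case True
      have rm: "r \<le> m" using \<alpha>(2) e True by simp
      have "eqv Qh (fst (Lay i r, L), a # snd (Lay i r, L)) (fst (Lay i r, Gam j r # cl r w), a # snd (Lay i r, Gam j r # cl r w))"
        apply (rule eqv_left[OF rfsQh])
        using IH True ACopy e A(2) sv iv \<alpha> by auto
      then have E1: "eqv Qh (Lay i r, a # L) (Lay i r, ACopy \<alpha> (Suc r) # Gam (src Q \<alpha>) r # cl r w)"
        using ACopy e True by simp
      have E2: "eqv Qh (Lay i r, ACopy \<alpha> (Suc r) # Gam (src Q \<alpha>) r # cl r w) (Lay i r, Gam (tgt Q \<alpha>) r # ACopy \<alpha> r # cl r w)"
        using comm_step[OF Ypath _ \<alpha>(1) rm] Yptgt e by simp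
      have "eqv Qh (Lay i r, a # L) (Lay i r, Gam (tgt Q \<alpha>) r # ACopy \<alpha> r # cl r w)"
        by (rule eqv_trans[OF E1 E2])
      then show ?thesis using ACopy True unfolding w_def by simp
    next
      case False
      show ?thesis
      proof (cases "2 \<le> ng L")
        case True
        have "ebasis (fst (Lay i r, L), a # snd (Lay i r, L)) \<in> ideal_of Qh"
          apply (rule mem_left[OF rfsQh])
          using IH True ACopy e A(2) sv iv \<alpha> by auto
        then show ?thesis using ACopy True by simp
      next
        case False
        then show ?thesis using \<open>ng L \<noteq> 1\<close> ACopy by simp
      qed
    qed
  next
    case (Gam k s)
    have kv: "k \<in> verts Q" "s \<le> m" using aA Gam by auto
    have e: "k = j" "s = r + ng L" using sa A(2) Gam by auto
    have sv: "Lay k s \<in> verts Qh" using kv by simp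
    show ?thesis
    proof (cases "ng L = 0")
      case True
      then have "L = cl r w" "s = r" using A(3) e by auto
      then show ?thesis using Gam e True eqv_refl unfolding w_def j_def by simp
    next
      case False
      show ?thesis
      proof (cases "ng L = 1")
        case True
        have rm: "r < m" using kv e True by simp
        have "eqv Qh (fst (Lay i r, L), a # snd (Lay i r, L)) (fst (Lay i r, Gam j r # cl r w), a # snd (Lay i r, Gam j r # cl r w))"
          apply (rule eqv_left[OF rfsQh])
          using IH True Gam e A(2) sv iv kv by auto
        then have E1: "eqv Qh (Lay i r, a # L) (Lay i r, Gam j (Suc r) # Gam j r # cl r w)"
          using Gam e True by simp
        have "ebasis (Lay i r, Gam j (Suc r) # Gam j r # cl r w) \<in> ideal_of Qh"
          using gg_step[OF Ypath Yptgt jv rm] by simp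
        then have "ebasis (Lay i r, a # L) \<in> ideal_of Qh" by (rule eqv_mem[OF E1])
        then show ?thesis using Gam True by simp
      next
        case False
        then have "2 \<le> ng L" using \<open>ng L \<noteq> 0\<close> by simp
        have "ebasis (fst (Lay i r, L), a # snd (Lay i r, L)) \<in> ideal_of Qh"
          apply (rule mem_left[OF rfsQh])
          using IH \<open>2 \<le> ng L\<close> Gam e A(2) sv iv kv by auto
        then show ?thesis using Gam \<open>2 \<le> ng L\<close> by simp
      qed
    qed
  qed
qed

end


definition psiG :: "nat \<Rightarrow> nat \<Rightarrow> ('v vert \<times> ('v,'a) arr list \<Rightarrow> 'k::field) \<Rightarrow> 'v vert \<times> ('v,'a) arr list \<Rightarrow> 'k" where
  "psiG g s \<theta> P = (if nb (snd P) = 0 \<and> ng (snd P) = g \<and> fl (fst P) = s then \<theta> (base (fst P), strip (snd P)) else 0)"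

lemma ev_zero_fun: "ev (\<lambda>_. 0) a = (0::'k::field)" by (simp add: ev_def)

lemma psiG_comp: "psiG g s \<theta> (pcomp (vX, LX) (pcomp (v, W) (vY, LY))) =
   (if nb LX + nb W + nb LY = 0 \<and> ng LX + ng W + ng LY = g \<and> fl vY = s then \<theta> (base vY, strip LX @ strip W @ strip LY) else 0)"
  by (simp add: psiG_def pcomp_simp)

context mlq
begin

lemma kill_cases:
  assumes copy: "\<And>\<rho>0 t X Y. \<rho>0 \<in> rels Q \<Longrightarrow> t \<le> Suc m \<Longrightarrow> is_path Qh X \<Longrightarrow> is_path Qh Y \<Longrightarrow>
      ev \<psi> (mul3 Qh X (pushf (pcopy t) \<rho>0) Y) = 0"
    and gg: "\<And>i t X Y. i \<in> verts Q \<Longrightarrow> t < m \<Longrightarrow> is_path Qh X \<Longrightarrow> is_path Qh Y \<Longrightarrow>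
      ev \<psi> (mul3 Qh X (ebasis (Lay i t, [Gam i (Suc t), Gam i t])) Y) = 0"
    and comm: "\<And>\<alpha> t X Y. \<alpha> \<in> arrs Q \<Longrightarrow> t \<le> m \<Longrightarrow> is_path Qh X \<Longrightarrow> is_path Qh Y \<Longrightarrow>
      ev \<psi> (mul3 Qh X (\<lambda>z. ebasis (Lay (src Q \<alpha>) t, [ACopy \<alpha> (Suc t), Gam (src Q \<alpha>) t]) z
              - ebasis (Lay (src Q \<alpha>) t, [Gam (tgt Q \<alpha>) t, ACopy \<alpha> t]) z) Y) = 0"
    and rhoM: "\<And>\<rho> X Y. \<rho> \<in> rho_M Q m M \<Longrightarrow> is_path Qh X \<Longrightarrow> is_path Qh Y \<Longrightarrow>
      ev \<psi> (mul3 Qh X \<rho> Y) = 0"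
  shows "a \<in> ideal_of Qh \<Longrightarrow> ev \<psi> a = 0"
proof (rule ideal_kill[OF rfsQh])
  fix r X Y assume r: "r \<in> rels Qh" and X: "is_path Qh X" and Y: "is_path Qh Y"
  from r show "ev \<psi> (mul3 Qh X r Y) = 0" unfolding Qh_rels
  proof (elim UnE)
    assume "r \<in> {pushf (pcopy t) \<rho> | \<rho> t. \<rho> \<in> rels Q \<and> t \<le> Suc m}"
    then show ?thesis using copy X Y by blast
  next
    assume "r \<in> {ebasis (Lay i t, [Gam i (Suc t), Gam i t]) | i t. i \<in> verts Q \<and> t < m}"
    then show ?thesis using gg X Y by blast
  next
    assume "r \<in> {(\<lambda>z. ebasis (Lay (src Q \<alpha>) t, [ACopy \<alpha> (Suc t), Gam (src Q \<alpha>) t]) z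
              - ebasis (Lay (src Q \<alpha>) t, [Gam (tgt Q \<alpha>) t, ACopy \<alpha> t]) z) | \<alpha> t. \<alpha> \<in> arrs Q \<and> t \<le> m}"
    then show ?thesis using comm X Y by blast
  next
    assume "r \<in> rho_M Q m M"
    then show ?thesis using rhoM X Y by blast
  qed
qed

lemma ev_mul3_copy:
  assumes "fs \<rho>0"
  shows "ev \<psi> (mul3 Qh X (pushf (pcopy t) \<rho>0) Y) =
    ev (\<lambda>w0. if fst (pcopy t w0) = ptgt Qh Y \<and> ptgt Qh (pcopy t w0) = fst X then \<psi> (pcomp X (pcomp (pcopy t w0) Y)) else 0) \<rho>0"
  using assms by (simp add: ev_mul3 fs_pushf ev_pushf)

lemma ev_mul3_ebasis:
  "ev \<psi> (mul3 Qh X (ebasis u) Y) = (if fst u = ptgt Qh Y \<and> ptgt Qh u = fst X then \<psi> (pcomp X (pcomp u Y)) else (0::'k))"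
  by (simp add: ev_mul3 fs_ebasis ev_ebasis)

lemma ev_mul3_diff:
  assumes "u1 \<noteq> u2" "fst u1 = fst u2" "ptgt Qh u1 = ptgt Qh u2"
  shows "ev \<psi> (mul3 Qh X (\<lambda>z. ebasis u1 z - ebasis u2 z) Y) =
    (if fst u1 = ptgt Qh Y \<and> ptgt Qh u1 = fst X then \<psi> (pcomp X (pcomp u1 Y)) - \<psi> (pcomp X (pcomp u2 Y)) else (0::'k))"
proof -
  have f: "fs (\<lambda>z. ebasis u1 z - ebasis u2 z :: 'k)"
    by (rule finite_subset[of _ "{u1, u2}"]) (auto simp: ebasis_def)
  show ?thesis using assms by (simp add: ev_mul3[OF f] ev_diff_ebasis)
qed

lemma kill_G:
  assumes th: "\<forall>a\<in>ideal_of Q. ev \<theta> a = 0" and g: "g \<le> 1"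
  shows "a \<in> ideal_of Qh \<Longrightarrow> ev (psiG g s \<theta>) a = 0"
proof (rule kill_cases)
  fix \<rho>0 t X Y assume \<rho>0: "\<rho>0 \<in> rels Q" and t: "t \<le> Suc m" and X: "is_path Qh X" and Y: "is_path Qh Y"
  have f\<rho>: "fs \<rho>0" using \<rho>0 rfsQ unfolding rfs_def by blast
  obtain vX LX where Xe: "X = (vX, LX)" by (cases X)
  obtain vY LY where Ye: "Y = (vY, LY)" by (cases Y)
  obtain iX rX where vX: "vX = Lay iX rX" using path_Lay X Xe by blast
  obtain iY rY where vY: "vY = Lay iY rY" using path_Lay Y Ye by blast
  let ?\<phi> = "\<lambda>w0. if fst (pcopy t w0) = ptgt Qh Y \<and> ptgt Qh (pcopy t w0) = fst X
      then psiG g s \<theta> (pcomp X (pcomp (pcopy t w0) Y)) else 0"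
  have e0: "ev (psiG g s \<theta>) (mul3 Qh X (pushf (pcopy t) \<rho>0) Y) = ev ?\<phi> \<rho>0"
    by (rule ev_mul3_copy[OF f\<rho>])
  show "ev (psiG g s \<theta>) (mul3 Qh X (pushf (pcopy t) \<rho>0) Y) = 0"
  proof (cases "nb LX = 0 \<and> nb LY = 0 \<and> ng LX + ng LY = g \<and> rY = s \<and> t = rY + ng LY \<and> t = rX")
    case False
    have "?\<phi> = (\<lambda>_. 0)"
    proof
      fix w0
      show "?\<phi> w0 = 0"
      proof (cases "nb LX = 0 \<and> nb LY = 0 \<and> ng LX + ng LY = g \<and> rY = s")
        case True
        then have "\<not> (t = rY + ng LY \<and> t = rX)" using False by blast
        moreover have "ptgt Qh Y = Lay (ptgt Q (iY, strip LY)) (rY + ng LY)"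
          using lemA[of iY rY LY] Y Ye vY True by simp
        moreover have "fst (pcopy t w0) = Lay (fst w0) t" by (simp add: pcopy_eq)
        moreover have "ptgt Qh (pcopy t w0) = Lay (ptgt Q w0) t" by (rule ptgt_pcopy)
        ultimately show ?thesis using Xe vX by auto
      next
        case False
        then show ?thesis using Xe Ye vY by (auto simp: pcopy_eq psiG_comp)
      qed
    qed
    then show ?thesis using e0 by (simp add: ev_zero_fun)
  next
    case True
    define X0 where "X0 = (iX, strip LX)"
    define Y0 where "Y0 = (iY, strip LY)"
    have AX: "is_path Q X0" "ptgt Qh X = Lay (ptgt Q X0) (rX + ng LX)"
      using lemA[of iX rX LX] X Xe vX True unfolding X0_def by auto
    have AY: "is_path Q Y0" "ptgt Qh Y = Lay (ptgt Q Y0) (rY + ng LY)"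
      using lemA[of iY rY LY] Y Ye vY True unfolding Y0_def by auto
    have feq: "?\<phi> = (\<lambda>w0. if fst w0 = ptgt Q Y0 \<and> ptgt Q w0 = fst X0 then \<theta> (pcomp X0 (pcomp w0 Y0)) else 0)"
    proof
      fix w0
      show "?\<phi> w0 = (if fst w0 = ptgt Q Y0 \<and> ptgt Q w0 = fst X0 then \<theta> (pcomp X0 (pcomp w0 Y0)) else 0)"
        using True AY(2) Xe Ye vX vY unfolding X0_def Y0_def
        by (simp add: ptgt_pcopy) (auto simp: pcopy_eq psiG_def pcomp_simp)
    qed
    have "ev ?\<phi> \<rho>0 = ev (\<lambda>w0. if fst w0 = ptgt Q Y0 \<and> ptgt Q w0 = fst X0 then \<theta> (pcomp X0 (pcomp w0 Y0)) else 0) \<rho>0"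
      unfolding feq ..
    also have "\<dots> = ev \<theta> (mul3 Q X0 \<rho>0 Y0)" by (rule ev_mul3[OF f\<rho>, symmetric])
    also have "\<dots> = 0" using th ideal_of.gen[OF \<rho>0 AX(1) AY(1)] by blast
    finally show ?thesis using e0 by simp
  qed
next
  fix i t X Y assume "i \<in> verts Q" "t < m" "is_path Qh X" "is_path Qh Y"
  show "ev (psiG g s \<theta>) (mul3 Qh X (ebasis (Lay i t, [Gam i (Suc t), Gam i t])) Y) = 0"
    using g by (cases X, cases Y) (simp add: ev_mul3_ebasis psiG_comp)
next
  fix \<alpha> t X Y assume \<alpha>: "\<alpha> \<in> arrs Q" "t \<le> m" "is_path Qh X" "is_path Qh Y"
  show "ev (psiG g s \<theta>) (mul3 Qh X (\<lambda>z. ebasis (Lay (src Q \<alpha>) t, [ACopy \<alpha> (Suc t), Gam (src Q \<alpha>) t]) z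
              - ebasis (Lay (src Q \<alpha>) t, [Gam (tgt Q \<alpha>) t, ACopy \<alpha> t]) z) Y) = 0"
    by (cases X, cases Y) (simp add: ev_mul3_diff psiG_comp)
next
  fix \<rho> X Y assume \<rho>: "\<rho> \<in> rho_M Q m M" and "is_path Qh X" "is_path Qh Y"
  from \<rho> obtain S c where S: "finite S" and \<rho>e: "\<rho> = (\<lambda>z. \<Sum>t\<in>S. c t * ebasis (bpath m t) z)"
    unfolding rho_M_def by blast
  have f: "fs \<rho>" using \<rho> unfolding rho_M_def is_relation_def by blast
  have "ev (psiG g s \<theta>) (mul3 Qh X \<rho> Y) = (\<Sum>t\<in>S. c t * (if fst (bpath m t) = ptgt Qh Y \<and> ptgt Qh (bpath m t) = fst X
      then psiG g s \<theta> (pcomp X (pcomp (bpath m t) Y)) else 0))"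
    unfolding ev_mul3[OF f] unfolding \<rho>e by (rule ev_sum_ebasis[OF S])
  also have "\<dots> = 0"
    by (rule sum.neutral) (auto simp: bpath_def psiG_def pcomp_simp split: prod.splits)
  finally show "ev (psiG g s \<theta>) (mul3 Qh X \<rho> Y) = 0" .
qed

end


definition psiB :: "('v,'a,'k::field) uquiver \<Rightarrow> nat \<Rightarrow> ('v vert \<times> ('v,'a) arr list) set
    \<Rightarrow> 'v vert \<times> ('v,'a) arr list \<Rightarrow> 'v vert \<times> ('v,'a) arr list \<Rightarrow> 'k" where
  "psiB Q m M z P = (if nb (snd P) = 1 \<and> ng (snd P) = 0 then
     (case decb (snd P) of (X, s, as, Y) \<Rightarrow> dual_act Q m M (s, X) (s, as) (base (fst P), Y) z) else 0)"

lemma psiB_list: "psiB Q m M z (v, cl a X @ Beta s as # cl b Y) = dual_act Q m M (s, X) (s, as) (base v, Y) z"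
  by (simp add: psiB_def decb_bpath)

lemma psiB_zero: "\<not> (nb L = 1 \<and> ng L = 0) \<Longrightarrow> psiB Q m M z (v, L) = 0"
  by (auto simp: psiB_def)

lemma dual_act_eq: "dual_act Q m M x p y z = (if ptgt Q x = fst z \<and> ptgt Q z = fst y then dualf Q m M p (pcomp y (pcomp z x)) else 0)"
  by (simp add: dual_act_def)

lemma ptgt_app3: "ptgt Q (fst w, snd w) = ptgt Q w" by simp

context mlq
begin

lemma ptgt_bpath: "fst x = fst p \<Longrightarrow> ptgt Qh (bpath m (x, p, y)) = Lay (ptgt Q x) (Suc m)"
  by (cases x; cases "snd x") (auto simp: bpath_eq ptgt_def cl_def)

lemma fst_bpath: "fst (bpath m (x, p, y)) = Lay (fst y) 0" by (simp add: bpath_eq)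

lemma kill_B_copy:
  assumes z: "is_path Q z" and \<rho>0: "\<rho>0 \<in> rels Q" and t: "t \<le> Suc m" and X: "is_path Qh X" and Y: "is_path Qh Y"
  shows "ev (psiB Q m M z) (mul3 Qh X (pushf (pcopy t) \<rho>0) Y) = 0"
proof -
  have f\<rho>: "fs \<rho>0" using \<rho>0 rfsQ unfolding rfs_def by blast
  obtain vX LX where Xe: "X = (vX, LX)" by (cases X)
  obtain vY LY where Ye: "Y = (vY, LY)" by (cases Y)
  obtain iX rX where vX: "vX = Lay iX rX" using path_Lay X Xe by blast
  obtain iY rY where vY: "vY = Lay iY rY" using path_Lay Y Ye by blast
  let ?\<psi> = "psiB Q m M z"
  let ?\<phi> = "\<lambda>w0. if fst (pcopy t w0) = ptgt Qh Y \<and> ptgt Qh (pcopy t w0) = fst X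
      then ?\<psi> (pcomp X (pcomp (pcopy t w0) Y)) else 0"
  have e0: "ev ?\<psi> (mul3 Qh X (pushf (pcopy t) \<rho>0) Y) = ev ?\<phi> \<rho>0"
    by (rule ev_mul3_copy[OF f\<rho>])
  have fp: "fst (pcopy t w0) = Lay (fst w0) t" for w0 by (simp add: pcopy_eq)
  have comp: "pcomp X (pcomp (pcopy t w0) Y) = (vY, LX @ cl t (snd w0) @ LY)" for w0
    using Xe Ye by (simp add: pcomp_simp pcopy_eq)
  have XP: "is_path Qh (Lay iX rX, LX)" using X Xe vX by simp
  have YP: "is_path Qh (Lay iY rY, LY)" using Y Ye vY by simp
  show ?thesis
  proof (cases "nb LX + nb LY = 1 \<and> ng LX + ng LY = 0")
    case False
    have "?\<phi> = (\<lambda>_. 0)"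
    proof
      fix w0 show "?\<phi> w0 = 0" unfolding comp using False by (simp add: psiB_zero)
    qed
    then show ?thesis using e0 by (simp add: ev_zero_fun)
  next
    case True
    then have ng0: "ng LX = 0" "ng LY = 0" by auto
    consider (c1) "nb LX = 0" "nb LY = 1" | (c2) "nb LX = 1" "nb LY = 0" using True by linarith
    then show ?thesis
    proof cases
      case c1
      obtain y1 s as y2 where B: "LY = cl (Suc m) y1 @ Beta s as # cl 0 y2" "(s, as) \<in> M" "rY = 0"
        "is_path Q (iY, y2)" "ptgt Q (iY, y2) = ptgt Q (s, as)" "is_path Q (s, y1)"
        "ptgt Qh (Lay iY rY, LY) = Lay (ptgt Q (s, y1)) (Suc m)"
        using lemB[OF YP] c1 by auto
      define xs where "xs = strip LX"
      have A: "is_path Q (iX, xs)" "ptgt Qh (Lay iX rX, LX) = Lay (ptgt Q (iX, xs)) rX" "LX = cl rX xs"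
        using lemA[OF XP] c1 ng0 unfolding xs_def by auto
      show ?thesis
      proof (cases "t = Suc m \<and> rX = Suc m")
        case False
        have "?\<phi> = (\<lambda>_. 0)"
        proof
          fix w0 show "?\<phi> w0 = 0" using False B(7) Ye vY Xe vX fp[of w0] ptgt_pcopy[of t w0] by auto
        qed
        then show ?thesis using e0 by (simp add: ev_zero_fun)
      next
        case True
        define p where "p = (s, as)"
        define A0 where "A0 = (iX, xs)"
        define Bp where "Bp = (s, y1)"
        have val: "?\<phi> w0 = (if fst w0 = ptgt Q Bp \<and> ptgt Q w0 = iX then
            dual_act Q m M (s, xs @ snd w0 @ y1) p (iY, y2) z else 0)" for w0
        proof -
          have l: "LX @ cl t (snd w0) @ LY = cl (Suc m) (xs @ snd w0 @ y1) @ Beta s as # cl 0 y2"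
            using A(3) B(1) True by simp
          show ?thesis unfolding comp l psiB_list using fp[of w0] ptgt_pcopy[of t w0] True B(7) Ye vY Xe vX
            unfolding Bp_def p_def by auto
        qed
        have pt: "ptgt Q (s, xs @ snd w0 @ y1) = ptgt Q A0" if "fst w0 = ptgt Q Bp" "ptgt Q w0 = iX" for w0
        proof -
          have "ptgt Q (s, snd w0 @ y1) = ptgt Q (ptgt Q (s, y1), snd w0)" by (simp add: ptgt_app)
          also have "\<dots> = ptgt Q w0" using that(1) unfolding Bp_def by (metis prod.collapse)
          finally have "ptgt Q (s, snd w0 @ y1) = ptgt Q w0" .
          then show ?thesis using that unfolding A0_def by (simp add: ptgt_app[of Q s xs] )
        qed
        show ?thesis
        proof (cases "ptgt Q A0 = fst z \<and> ptgt Q z = iY")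
          case False
          have "?\<phi> = (\<lambda>_. 0)"
          proof
            fix w0 show "?\<phi> w0 = 0" unfolding val using pt[of w0] False by (auto simp: dual_act_eq)
          qed
          then show ?thesis using e0 by (simp add: ev_zero_fun)
        next
          case K: True
          define Ap where "Ap = pcomp (iY, y2) (pcomp z A0)"
          have Ap: "is_path Q Ap" unfolding Ap_def
          proof (rule is_path_pcomp)
            show "is_path Q (pcomp z A0)" using A(1) z K unfolding A0_def by (intro is_path_pcomp) auto
            show "is_path Q (iY, y2)" by (rule B(4))
            show "ptgt Q (pcomp z A0) = fst (iY, y2)" using K by (subst ptgt_pcomp) auto
          qed
          have fA: "fst Ap = iX" unfolding Ap_def A0_def by (simp add: pcomp_simp)
          have "?\<phi> = (\<lambda>w0. if fst w0 = ptgt Q Bp \<and> ptgt Q w0 = fst Ap then dualf Q m M p (pcomp Ap (pcomp w0 Bp)) else 0)"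
          proof
            fix w0
            show "?\<phi> w0 = (if fst w0 = ptgt Q Bp \<and> ptgt Q w0 = fst Ap then dualf Q m M p (pcomp Ap (pcomp w0 Bp)) else 0)"
              unfolding val fA using pt[of w0] K unfolding Ap_def A0_def Bp_def
              by (auto simp: dual_act_eq pcomp_simp)
          qed
          then have "ev ?\<phi> \<rho>0 = ev (dualf Q m M p) (mul3 Q Ap \<rho>0 Bp)" by (simp add: ev_mul3[OF f\<rho>])
          also have "\<dots> = 0"
            using dualf_kill[OF mb bqQ] ideal_of.gen[OF \<rho>0 Ap B(6)[folded Bp_def]] by blast
          finally show ?thesis using e0 by simp
        qed
      qed
    next
      case c2
      obtain x1 s as x2 where B: "LX = cl (Suc m) x1 @ Beta s as # cl 0 x2" "(s, as) \<in> M" "rX = 0"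
        "is_path Q (iX, x2)" "ptgt Q (iX, x2) = ptgt Q (s, as)" "is_path Q (s, x1)"
        using lemB[OF XP] c2 by auto
      define ys where "ys = strip LY"
      have A: "is_path Q (iY, ys)" "ptgt Qh (Lay iY rY, LY) = Lay (ptgt Q (iY, ys)) rY" "LY = cl rY ys"
        using lemA[OF YP] c2 ng0 unfolding ys_def by auto
      show ?thesis
      proof (cases "t = 0 \<and> rY = 0")
        case False
        have "?\<phi> = (\<lambda>_. 0)"
        proof
          fix w0 show "?\<phi> w0 = 0" using False A(2) B(3) Ye vY Xe vX fp[of w0] ptgt_pcopy[of t w0] by auto
        qed
        then show ?thesis using e0 by (simp add: ev_zero_fun)
      next
        case True
        define p where "p = (s, as)"
        define Y0 where "Y0 = (iY, ys)"
        have val: "?\<phi> w0 = (if fst w0 = ptgt Q Y0 \<and> ptgt Q w0 = iX then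
            dual_act Q m M (s, x1) p (iY, x2 @ snd w0 @ ys) z else 0)" for w0
        proof -
          have l: "LX @ cl t (snd w0) @ LY = cl (Suc m) x1 @ Beta s as # cl 0 (x2 @ snd w0 @ ys)"
            using A(3) B(1) True by simp
          show ?thesis unfolding comp l psiB_list using fp[of w0] ptgt_pcopy[of t w0] True A(2) B(3) Ye vY Xe vX
            unfolding Y0_def p_def by auto
        qed
        show ?thesis
        proof (cases "ptgt Q (s, x1) = fst z \<and> ptgt Q z = iY")
          case False
          have "?\<phi> = (\<lambda>_. 0)"
          proof
            fix w0 show "?\<phi> w0 = 0" unfolding val using False by (auto simp: dual_act_eq)
          qed
          then show ?thesis using e0 by (simp add: ev_zero_fun)
        next
          case K: True
          define Bp where "Bp = pcomp Y0 (pcomp z (s, x1))"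
          have Bp: "is_path Q Bp" unfolding Bp_def
          proof (rule is_path_pcomp)
            show "is_path Q (pcomp z (s, x1))" using B(6) z K by (intro is_path_pcomp) auto
            show "is_path Q Y0" unfolding Y0_def by (rule A(1))
            show "ptgt Q (pcomp z (s, x1)) = fst Y0" using K unfolding Y0_def by (subst ptgt_pcomp) auto
          qed
          have pB: "ptgt Q Bp = ptgt Q Y0" unfolding Bp_def
            using K unfolding Y0_def by (subst ptgt_pcomp, subst ptgt_pcomp) auto
          have "?\<phi> = (\<lambda>w0. if fst w0 = ptgt Q Bp \<and> ptgt Q w0 = fst (iX, x2) then dualf Q m M p (pcomp (iX, x2) (pcomp w0 Bp)) else 0)"
          proof
            fix w0
            show "?\<phi> w0 = (if fst w0 = ptgt Q Bp \<and> ptgt Q w0 = fst (iX, x2) then dualf Q m M p (pcomp (iX, x2) (pcomp w0 Bp)) else 0)"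
              unfolding val pB using K unfolding Bp_def Y0_def
              by (auto simp: dual_act_eq pcomp_simp)
          qed
          then have "ev ?\<phi> \<rho>0 = ev (dualf Q m M p) (mul3 Q (iX, x2) \<rho>0 Bp)" by (simp add: ev_mul3[OF f\<rho>])
          also have "\<dots> = 0"
            using dualf_kill[OF mb bqQ] ideal_of.gen[OF \<rho>0 B(4) Bp] by blast
          finally show ?thesis using e0 by simp
        qed
      qed
    qed
  qed
qed

lemma kill_B_rhoM:
  assumes z: "is_path Q z" and \<rho>: "\<rho> \<in> rho_M Q m M" and X: "is_path Qh X" and Y: "is_path Qh Y"
  shows "ev (psiB Q m M z) (mul3 Qh X \<rho> Y) = 0"
proof -
  from \<rho> obtain S c where rel: "is_relation (ml_base Q m M) \<rho>" and S: "finite S"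
    and conds: "\<forall>(x, p, y)\<in>S. is_path Q x \<and> p \<in> M \<and> is_path Q y \<and> fst x = fst p \<and> ptgt Q y = ptgt Q p"
    and \<rho>e: "\<rho> = (\<lambda>z. \<Sum>t\<in>S. c t * ebasis (bpath m t) z)"
    and dualc: "\<forall>z. is_path Q z \<longrightarrow> (\<Sum>t\<in>S. c t * (case t of (x, p, y) \<Rightarrow> dual_act Q m M x p y z)) = 0"
    unfolding rho_M_def by blast
  have f: "fs \<rho>" using rel unfolding is_relation_ml is_relation_def by blast
  let ?\<psi> = "psiB Q m M z"
  let ?\<phi> = "\<lambda>u. if fst u = ptgt Qh Y \<and> ptgt Qh u = fst X then ?\<psi> (pcomp X (pcomp u Y)) else 0"
  have e1: "ev ?\<psi> (mul3 Qh X \<rho> Y) = (\<Sum>t\<in>S. c t * ?\<phi> (bpath m t))"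
    unfolding ev_mul3[OF f] unfolding \<rho>e by (rule ev_sum_ebasis[OF S])
  obtain vX LX where Xe: "X = (vX, LX)" by (cases X)
  obtain vY LY where Ye: "Y = (vY, LY)" by (cases Y)
  obtain iX rX where vX: "vX = Lay iX rX" using path_Lay X Xe by blast
  obtain iY rY where vY: "vY = Lay iY rY" using path_Lay Y Ye by blast
  have XP: "is_path Qh (Lay iX rX, LX)" using X Xe vX by simp
  have YP: "is_path Qh (Lay iY rY, LY)" using Y Ye vY by simp
  have comp: "pcomp X (pcomp (bpath m (x, p, y)) Y) = (vY, LX @ (cl (Suc m) (snd x) @ Beta (fst p) (snd p) # cl 0 (snd y)) @ LY)"
    for x p y using Xe Ye by (simp add: pcomp_simp bpath_eq)
  show ?thesis
  proof (cases "nb LX = 0 \<and> nb LY = 0 \<and> ng LX = 0 \<and> ng LY = 0")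
    case False
    have "?\<phi> (bpath m t) = 0" for t
    proof -
      obtain x p y where t: "t = (x, p, y)" by (cases t)
      show ?thesis unfolding t comp using False by (auto simp: psiB_zero)
    qed
    then show ?thesis using e1 by simp
  next
    case True
    define xs where "xs = strip LX"
    define ys where "ys = strip LY"
    define X0 where "X0 = (iX, xs)"
    define Y0 where "Y0 = (iY, ys)"
    have AX: "is_path Q X0" "ptgt Qh (Lay iX rX, LX) = Lay (ptgt Q X0) rX" "LX = cl rX xs"
      using lemA[OF XP] True unfolding xs_def X0_def by auto
    have AY: "is_path Q Y0" "ptgt Qh (Lay iY rY, LY) = Lay (ptgt Q Y0) rY" "LY = cl rY ys"
      using lemA[OF YP] True unfolding ys_def Y0_def by auto
    have cond: "fst (bpath m (x, p, y)) = ptgt Qh Y \<and> ptgt Qh (bpath m (x, p, y)) = fst X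
        \<longleftrightarrow> fst y = ptgt Q Y0 \<and> rY = 0 \<and> ptgt Q x = iX \<and> rX = Suc m" if "fst x = fst p" for x p y
      using AY(2) Ye vY Xe vX ptgt_bpath[OF that, of y] fst_bpath[of x p y] by auto
    show ?thesis
    proof (cases "rY = 0 \<and> rX = Suc m")
      case False
      have "?\<phi> (bpath m t) = 0" if "t \<in> S" for t
      proof -
        obtain x p y where t: "t = (x, p, y)" by (cases t)
        have "fst x = fst p" using conds that t by auto
        then show ?thesis unfolding t using cond[of x p y] False by auto
      qed
      then show ?thesis using e1 by simp
    next
      case rr: True
      have val: "?\<phi> (bpath m (x, p, y)) = (if fst y = ptgt Q Y0 \<and> ptgt Q x = iX then
          dual_act Q m M (fst p, xs @ snd x) p (iY, snd y @ ys) z else 0)" if fx: "fst x = fst p" for x p y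
      proof -
        have l: "LX @ (cl (Suc m) (snd x) @ Beta (fst p) (snd p) # cl 0 (snd y)) @ LY
            = cl (Suc m) (xs @ snd x) @ Beta (fst p) (snd p) # cl 0 (snd y @ ys)"
          using AX(3) AY(3) rr by simp
        show ?thesis unfolding comp l psiB_list using cond[OF fx] rr vY by auto
      qed
      have pt: "ptgt Q (fst p, xs @ snd x) = ptgt Q X0" if "fst x = fst p" "ptgt Q x = iX" for x p
      proof -
        have "ptgt Q (fst p, xs @ snd x) = ptgt Q (ptgt Q (fst p, snd x), xs)" by (simp add: ptgt_app)
        also have "\<dots> = ptgt Q X0" using that unfolding X0_def by (metis prod.collapse)
        finally show ?thesis .
      qed
      show ?thesis
      proof (cases "ptgt Q X0 = fst z \<and> ptgt Q z = iY")
        case False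
        have "?\<phi> (bpath m t) = 0" if "t \<in> S" for t
        proof -
          obtain x p y where t: "t = (x, p, y)" by (cases t)
          have fx: "fst x = fst p" using conds that t by auto
          show ?thesis unfolding t val[OF fx] using pt[OF fx] False by (auto simp: dual_act_eq)
        qed
        then show ?thesis using e1 by simp
      next
        case K: True
        define Z where "Z = pcomp Y0 (pcomp z X0)"
        have Zp: "is_path Q Z" unfolding Z_def
        proof (rule is_path_pcomp)
          show "is_path Q (pcomp z X0)" using AX(1) z K by (intro is_path_pcomp) auto
          show "is_path Q Y0" by (rule AY(1))
          show "ptgt Q (pcomp z X0) = fst Y0" using K unfolding Y0_def by (subst ptgt_pcomp) auto
        qed
        have fZ: "fst Z = iX" unfolding Z_def X0_def by (simp add: pcomp_simp)
        have pZ: "ptgt Q Z = ptgt Q Y0" unfolding Z_def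
          using K unfolding Y0_def by (subst ptgt_pcomp, subst ptgt_pcomp) auto
        have "?\<phi> (bpath m t) = (case t of (x, p, y) \<Rightarrow> dual_act Q m M x p y Z)" if "t \<in> S" for t
        proof -
          obtain x p y where t: "t = (x, p, y)" by (cases t)
          have fx: "fst x = fst p" using conds that t by auto
          show ?thesis unfolding t val[OF fx] using pt[OF fx] K fZ pZ fx unfolding Z_def X0_def Y0_def
            by (auto simp: dual_act_eq pcomp_simp)
        qed
        then have "(\<Sum>t\<in>S. c t * ?\<phi> (bpath m t)) = (\<Sum>t\<in>S. c t * (case t of (x, p, y) \<Rightarrow> dual_act Q m M x p y Z))"
          by (intro sum.cong) auto
        also have "\<dots> = 0" using dualc Zp by blast
        finally show ?thesis using e1 by simp
      qed
    qed
  qed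
qed

lemma kill_B:
  assumes z: "is_path Q z"
  shows "a \<in> ideal_of Qh \<Longrightarrow> ev (psiB Q m M z) a = 0"
proof (rule kill_cases)
  fix \<rho>0 t X Y assume "\<rho>0 \<in> rels Q" "t \<le> Suc m" "is_path Qh X" "is_path Qh Y"
  then show "ev (psiB Q m M z) (mul3 Qh X (pushf (pcopy t) \<rho>0) Y) = 0" using kill_B_copy[OF z] by blast
next
  fix i t X Y assume "i \<in> verts Q" "t < m" "is_path Qh X" "is_path Qh Y"
  show "ev (psiB Q m M z) (mul3 Qh X (ebasis (Lay i t, [Gam i (Suc t), Gam i t])) Y) = 0"
    by (cases X, cases Y) (simp add: ev_mul3_ebasis psiB_def pcomp_simp)
next
  fix \<alpha> t X Y assume "\<alpha> \<in> arrs Q" "t \<le> m" "is_path Qh X" "is_path Qh Y"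
  show "ev (psiB Q m M z) (mul3 Qh X (\<lambda>z. ebasis (Lay (src Q \<alpha>) t, [ACopy \<alpha> (Suc t), Gam (src Q \<alpha>) t]) z
              - ebasis (Lay (src Q \<alpha>) t, [Gam (tgt Q \<alpha>) t, ACopy \<alpha> t]) z) Y) = 0"
    by (cases X, cases Y) (simp add: ev_mul3_diff psiB_def pcomp_simp)
next
  fix \<rho> X Y assume "\<rho> \<in> rho_M Q m M" "is_path Qh X" "is_path Qh Y"
  then show "ev (psiB Q m M z) (mul3 Qh X \<rho> Y) = 0" using kill_B_rhoM[OF z] by blast
qed

end


context mlq
begin

lemma path_floor: "is_path Qh (Lay i r, L) \<Longrightarrow> i \<in> verts Q \<and> r \<le> Suc m"
  by (simp add: is_path_def)

lemma bound_copy_base: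
  assumes b: "bound_path Qh (Lay i r, L)" and nb0: "nb L = 0" and ng0: "ng L = 0"
  shows "bound_path Q (i, strip L)"
proof -
  have P: "is_path Qh (Lay i r, L)" using b unfolding bound_path_def by blast
  have A: "is_path Q (i, strip L)" "L = cl r (strip L)" using lemA[OF P nb0] ng0 by auto
  have r: "r \<le> Suc m" using path_floor[OF P] by blast
  have "ebasis (i, strip L) \<notin> ideal_of Q"
  proof
    assume "ebasis (i, strip L) \<in> ideal_of Q"
    from transfer_path[OF this r] have "ebasis (Lay i r, cl r (strip L)) \<in> ideal_of Qh" by (simp add: pcopy_eq)
    then show False using b A(2) unfolding bound_path_def by simp
  qed
  then show ?thesis using A(1) unfolding bound_path_def by blast
qed

lemma bound_g1_base:
  assumes b: "bound_path Qh (Lay i r, L)" and nb0: "nb L = 0" and ng1: "ng L = 1"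
  shows "bound_path Q (i, strip L)"
proof -
  have P: "is_path Qh (Lay i r, L)" using b unfolding bound_path_def by blast
  define j where "j = ptgt Q (i, strip L)"
  have A: "is_path Q (i, strip L)" "ptgt Qh (Lay i r, L) = Lay j (Suc r)" using lemA[OF P nb0] ng1 unfolding j_def by auto
  have jv: "j \<in> verts Q" unfolding j_def by (rule ptgt_in_verts[OF bqQ A(1)])
  have "Lay j (Suc r) \<in> verts Qh" using A(2) ptgt_in_verts[OF bqQh P] by simp
  then have rm: "r \<le> m" by simp
  have E: "eqv Qh (Lay i r, L) (Lay i r, Gam j r # cl r (strip L))" using lemC[OF P nb0] ng1 unfolding j_def by simp
  have "ebasis (i, strip L) \<notin> ideal_of Q"
  proof
    assume "ebasis (i, strip L) \<in> ideal_of Q"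
    from transfer_path[OF this] rm have c: "ebasis (Lay i r, cl r (strip L)) \<in> ideal_of Qh" by (simp add: pcopy_eq)
    have "ebasis (fst (Lay i r, cl r (strip L)), Gam j r # snd (Lay i r, cl r (strip L))) \<in> ideal_of Qh"
    proof (rule mem_left[OF rfsQh c])
      show "ptgt Qh (Lay i r, cl r (strip L)) = src Qh (Gam j r)"
        using ptgt_pcopy[of r "(i, strip L)"] unfolding j_def by (simp add: pcopy_eq)
    qed (use jv rm path_floor[OF P] in auto)
    then have "ebasis (Lay i r, L) \<in> ideal_of Qh" using eqv_mem[OF E] by simp
    then show False using b unfolding bound_path_def by simp
  qed
  then show ?thesis using A(1) unfolding bound_path_def by blast
qed

lemma bound_ng2:
  assumes b: "bound_path Qh (Lay i r, L)" and nb0: "nb L = 0"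
  shows "ng L \<le> 1"
proof (rule ccontr)
  assume "\<not> ng L \<le> 1"
  have P: "is_path Qh (Lay i r, L)" using b unfolding bound_path_def by blast
  then have "ebasis (Lay i r, L) \<in> ideal_of Qh" using lemC[OF P nb0] \<open>\<not> ng L \<le> 1\<close> by simp
  then show False using b unfolding bound_path_def by simp
qed

lemma exists_z:
  assumes b: "bound_path Qh (Lay i 0, cl (Suc m) X @ Beta s as # cl 0 Y)"
    and sM: "(s, as) \<in> M" and pY: "is_path Q (i, Y)" and tY: "ptgt Q (i, Y) = ptgt Q (s, as)" and pX: "is_path Q (s, X)"
  shows "\<exists>z. is_path Q z \<and> dual_act Q m M (s, X) (s, as) (i, Y) z \<noteq> 0"
proof (rule ccontr)
  assume nz: "\<not> (\<exists>z. is_path Q z \<and> dual_act Q m M (s, X) (s, as) (i, Y) z \<noteq> 0)"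
  define P where "P = (Lay i 0, cl (Suc m) X @ Beta s as # cl 0 Y)"
  have PP: "is_path Qh P" using b unfolding bound_path_def P_def by blast
  show False
  proof (cases "X = [] \<and> Y = []")
    case True
    have pp: "is_path Q (s, as)" using Mpath[OF sM] by blast
    have "dual_act Q m M (s, X) (s, as) (i, Y) (s, as) = dualf Q m M (s, as) (s, as)"
      using True tY by (simp add: dual_act_eq pcomp_simp)
    also have "\<dots> = 1" using dualf_ind[OF mb sM] by simp
    finally show False using nz pp by auto
  next
    case False
    have len: "2 \<le> plen P" using False unfolding P_def plen_def by (cases X; cases Y) auto
    have bp: "bpath m ((s, X), (s, as), (i, Y)) = P" unfolding P_def by (simp add: bpath_eq)
    have "ebasis P \<in> rho_M Q m M"
      unfolding rho_M_def
    proof (intro CollectI conjI exI)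
      show "is_relation (ml_base Q m M) (ebasis P)" unfolding is_relation_ml by (rule rel_single[OF PP len])
      show "finite {((s, X), (s, as), (i, Y))}" by simp
      show "\<forall>(x, p, y)\<in>{((s, X), (s, as), (i, Y))}. is_path Q x \<and> p \<in> M \<and> is_path Q y \<and> fst x = fst p \<and> ptgt Q y = ptgt Q p"
        using pX sM pY tY by simp
      show "ebasis P = (\<lambda>z. \<Sum>t\<in>{((s, X), (s, as), (i, Y))}. (\<lambda>_. 1) t * ebasis (bpath m t) z)"
        using bp by simp
      show "\<forall>z. is_path Q z \<longrightarrow> (\<Sum>t\<in>{((s, X), (s, as), (i, Y))}. (\<lambda>_. 1) t * (case t of (x, p, y) \<Rightarrow> dual_act Q m M x p y z)) = 0"
        using nz by simp
    qed
    then have r: "ebasis P \<in> rels Qh" unfolding Qh_rels by blast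
    have tv: "is_path Qh (ptgt Qh P, [])" using ptgt_in_verts[OF bqQh PP] by simp
    have fv: "is_path Qh (fst P, [])" using PP by (simp add: is_path_def)
    have "mul3 Qh (ptgt Qh P, []) (ebasis P) (fst P, []) \<in> ideal_of Qh" by (rule ideal_of.gen[OF r tv fv])
    then have "ebasis P \<in> ideal_of Qh" by (simp add: mul3_ebasis pcomp_simp)
    then show False using b unfolding bound_path_def P_def by simp
  qed
qed

lemma upper:
  assumes b: "bound_path Qh P"
  shows "plen P \<le> Suc m"
proof -
  obtain v L where Pe: "P = (v, L)" by (cases P)
  have PP: "is_path Qh (v, L)" using b Pe unfolding bound_path_def by blast
  obtain i r where v: "v = Lay i r" using path_Lay[OF PP] by blast
  have PP': "is_path Qh (Lay i r, L)" using PP v by simp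
  have b': "bound_path Qh (Lay i r, L)" using b Pe v by simp
  have len: "length L = length (strip L) + ng L + nb L" using PP by (intro length_decomp) (simp add: is_path_def)
  show ?thesis
  proof (cases "nb L = 0")
    case True
    have g: "ng L \<le> 1" by (rule bound_ng2[OF b' True])
    have "bound_path Q (i, strip L)"
      using g bound_copy_base[OF b' True] bound_g1_base[OF b' True] by (cases "ng L") auto
    then have "length (strip L) \<le> m" using bound_le[OF fin ngd] unfolding plen_def by fastforce
    then show ?thesis using len True g Pe unfolding plen_def by simp
  next
    case False
    obtain X s as Y where B: "L = cl (Suc m) X @ Beta s as # cl 0 Y" "(s, as) \<in> M" "r = 0"
       "is_path Q (i, Y)" "ptgt Q (i, Y) = ptgt Q (s, as)" "is_path Q (s, X)"
      using lemB[OF PP' False] by blast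
    have b'': "bound_path Qh (Lay i 0, cl (Suc m) X @ Beta s as # cl 0 Y)" using b' B(1) B(3) by simp
    obtain z where z: "is_path Q z" "dual_act Q m M (s, X) (s, as) (i, Y) z \<noteq> 0"
      using exists_z[OF b'' B(2) B(4) B(5) B(6)] by blast
    then have "dualf Q m M (s, as) (pcomp (i, Y) (pcomp z (s, X))) \<noteq> 0"
      by (auto simp: dual_act_eq split: if_splits)
    then have "plen (pcomp (i, Y) (pcomp z (s, X))) = m" using dualf_nz by blast
    then have "length Y + length X \<le> m" by (simp add: plen_def pcomp_simp)
    then show ?thesis using B(1) Pe unfolding plen_def by simp
  qed
qed

lemma not_max_I:
  "\<alpha> \<in> arrs Qh \<Longrightarrow> (src Qh \<alpha> = ptgt Qh P \<and> bound_path Qh (fst P, \<alpha> # snd P)) \<or>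
     (tgt Qh \<alpha> = fst P \<and> bound_path Qh (src Qh \<alpha>, snd P @ [\<alpha>])) \<Longrightarrow> \<not> maximal_bound_path Qh P"
  unfolding maximal_bound_path_def by blast

lemma bound_by_G:
  assumes "is_path Qh P" "\<forall>a\<in>ideal_of Q. ev \<theta> a = 0" "g \<le> 1" "psiG g s \<theta> P \<noteq> 0"
  shows "bound_path Qh P"
proof -
  have "ebasis P \<notin> ideal_of Qh"
  proof
    assume "ebasis P \<in> ideal_of Qh"
    from kill_G[OF assms(2) assms(3) this, of s] have "psiG g s \<theta> P = 0" by (simp add: ev_ebasis)
    then show False using assms(4) by simp
  qed
  then show ?thesis using assms(1) unfolding bound_path_def by blast
qed

lemma bound_by_B:
  assumes "is_path Qh P" "is_path Q z" "psiB Q m M z P \<noteq> 0"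
  shows "bound_path Qh P"
proof -
  have "ebasis P \<notin> ideal_of Qh"
  proof
    assume "ebasis P \<in> ideal_of Qh"
    from kill_B[OF assms(2) this] have "psiB Q m M z P = 0" by (simp add: ev_ebasis)
    then show False using assms(3) by simp
  qed
  then show ?thesis using assms(1) unfolding bound_path_def by blast
qed

lemma ext_G:
  assumes PP: "is_path Qh (Lay i r, L)" and nb0: "nb L = 0" and g: "ng L \<le> 1"
    and bW: "bound_path Q (i, strip L)" and lt: "plen (i, strip L) < m"
  shows "\<not> maximal_bound_path Qh (Lay i r, L)"
proof -
  define w where "w = strip L"
  define j where "j = ptgt Q (i, w)"
  have pg: "properly_graded m Q" using ngd unfolding m_nicely_graded_def by blast
  have nm: "\<not> maximal_bound_path Q (i, w)" using pg lt unfolding properly_graded_def w_def by auto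
  obtain \<alpha> where \<alpha>: "\<alpha> \<in> arrs Q" and alt: "(src Q \<alpha> = ptgt Q (i, w) \<and> bound_path Q (i, \<alpha> # w)) \<or>
      (tgt Q \<alpha> = i \<and> bound_path Q (src Q \<alpha>, w @ [\<alpha>]))"
    using not_max_ext[OF bW[folded w_def] nm] by auto
  have A: "is_path Q (i, w)" "ptgt Qh (Lay i r, L) = Lay j (r + ng L)"
    using lemA[OF PP nb0] unfolding w_def j_def by auto
  have fl: "r + ng L \<le> Suc m" using ptgt_in_verts[OF bqQh PP] A(2) by simp
  have iv: "i \<in> verts Q" "r \<le> Suc m" using path_floor[OF PP] by auto
  have sv: "src Q \<alpha> \<in> verts Q" using bqQ \<alpha> unfolding bound_quiver_def by blast
  from alt show ?thesis
  proof
    assume h: "src Q \<alpha> = ptgt Q (i, w) \<and> bound_path Q (i, \<alpha> # w)"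
    obtain \<theta> where th: "\<forall>a\<in>ideal_of Q. ev \<theta> a = 0" "\<theta> (i, \<alpha> # w) \<noteq> 0"
      using theta_exists[OF fin ngQ] h by blast
    let ?a = "ACopy \<alpha> (r + ng L)"
    have P': "is_path Qh (Lay i r, ?a # L)" using PP \<alpha> fl A(2) h unfolding j_def by (simp add: is_path_Cons)
    have "psiG (ng L) r \<theta> (Lay i r, ?a # L) \<noteq> 0" using th nb0 unfolding psiG_def w_def by simp
    then have "bound_path Qh (Lay i r, ?a # L)" by (rule bound_by_G[OF P' th(1) g])
    then show ?thesis using \<alpha> fl A(2) h unfolding j_def by (intro not_max_I[of ?a]) auto
  next
    assume h: "tgt Q \<alpha> = i \<and> bound_path Q (src Q \<alpha>, w @ [\<alpha>])"
    obtain \<theta> where th: "\<forall>a\<in>ideal_of Q. ev \<theta> a = 0" "\<theta> (src Q \<alpha>, w @ [\<alpha>]) \<noteq> 0"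
      using theta_exists[OF fin ngQ] h by blast
    let ?a = "ACopy \<alpha> r"
    have P': "is_path Qh (Lay (src Q \<alpha>) r, L @ [?a])"
    proof (rule is_path_appI)
      show "is_path Qh (Lay (src Q \<alpha>) r, [?a])" using \<alpha> sv iv by (simp add: is_path_Cons)
      show "is_path Qh (ptgt Qh (Lay (src Q \<alpha>) r, [?a]), L)" using PP h by simp
    qed
    have "psiG (ng L) r \<theta> (Lay (src Q \<alpha>) r, L @ [?a]) \<noteq> 0" using th nb0 unfolding psiG_def w_def by simp
    then have "bound_path Qh (Lay (src Q \<alpha>) r, L @ [?a])" by (rule bound_by_G[OF P' th(1) g])
    then show ?thesis using \<alpha> iv h by (intro not_max_I[of ?a]) auto
  qed
qed

lemma lower:
  assumes b: "bound_path Qh P" and le: "plen P \<le> m"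
  shows "\<not> maximal_bound_path Qh P"
proof -
  obtain v L where Pe: "P = (v, L)" by (cases P)
  have PP0: "is_path Qh (v, L)" using b Pe unfolding bound_path_def by blast
  obtain i r where v: "v = Lay i r" using path_Lay[OF PP0] by blast
  have PP: "is_path Qh (Lay i r, L)" using PP0 v by simp
  have b': "bound_path Qh (Lay i r, L)" using b Pe v by simp
  have len: "length L = length (strip L) + ng L + nb L" using PP by (intro length_decomp) (simp add: is_path_def)
  have le': "length L \<le> m" using le Pe unfolding plen_def by simp
  have iv: "i \<in> verts Q" "r \<le> Suc m" using path_floor[OF PP] by auto
  show ?thesis unfolding Pe v
  proof (cases "nb L = 0")
    case False
    obtain X s as Y where B: "L = cl (Suc m) X @ Beta s as # cl 0 Y" "(s, as) \<in> M" "r = 0"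
       "is_path Q (i, Y)" "ptgt Q (i, Y) = ptgt Q (s, as)" "is_path Q (s, X)"
       "ptgt Qh (Lay i r, L) = Lay (ptgt Q (s, X)) (Suc m)"
      using lemB[OF PP False] by blast
    have b'': "bound_path Qh (Lay i 0, cl (Suc m) X @ Beta s as # cl 0 Y)" using b' B(1) B(3) by simp
    obtain z where z: "is_path Q z" "dual_act Q m M (s, X) (s, as) (i, Y) z \<noteq> 0"
      using exists_z[OF b'' B(2) B(4) B(5) B(6)] by blast
    have zc: "ptgt Q (s, X) = fst z" "ptgt Q z = i" and D: "dualf Q m M (s, as) (pcomp (i, Y) (pcomp z (s, X))) \<noteq> 0"
      using z(2) by (auto simp: dual_act_eq split: if_splits)
    have "plen (pcomp (i, Y) (pcomp z (s, X))) = m" using dualf_nz[OF D] by blast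
    then have lz: "length Y + length (snd z) + length X = m" by (simp add: plen_def pcomp_simp)
    have "length L = length X + 1 + length Y" using B(1) by simp
    then have "snd z \<noteq> []" using lz le' by auto
    then obtain zl \<alpha> where zs: "snd z = zl @ [\<alpha>]" by (metis rev_exhaust)
    have zp: "is_path Q (fst z, zl @ [\<alpha>])" using z(1) zs by (metis prod.collapse)
    have p\<alpha>: "is_path Q (fst z, [\<alpha>])" using is_path_appD1[OF zp] .
    have pz': "is_path Q (tgt Q \<alpha>, zl)" using is_path_appD2[OF bqQ zp] by simp
    have \<alpha>: "\<alpha> \<in> arrs Q" "src Q \<alpha> = fst z" using p\<alpha> by (auto simp: is_path_Cons)
    have tz': "ptgt Q (tgt Q \<alpha>, zl) = i" using zc(2) zs ptgt_app[of Q "fst z" zl "[\<alpha>]"]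
      by (metis prod.collapse ptgt_Cons ptgt_Nil)
    let ?a = "ACopy \<alpha> (Suc m)"
    have P': "is_path Qh (Lay i r, ?a # L)" using PP \<alpha> B(7) zc(1) by (simp add: is_path_Cons)
    have l: "?a # L = cl (Suc m) (\<alpha> # X) @ Beta s as # cl 0 Y" using B(1) by simp
    have "psiB Q m M (tgt Q \<alpha>, zl) (Lay i r, ?a # L) = dual_act Q m M (s, \<alpha> # X) (s, as) (i, Y) (tgt Q \<alpha>, zl)"
      unfolding l psiB_list by simp
    also have "\<dots> = dualf Q m M (s, as) (pcomp (i, Y) (pcomp z (s, X)))"
      using tz' zs by (simp add: dual_act_eq pcomp_simp)
    finally have "psiB Q m M (tgt Q \<alpha>, zl) (Lay i r, ?a # L) \<noteq> 0" using D by simp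
    then have "bound_path Qh (Lay i r, ?a # L)" by (rule bound_by_B[OF P' pz'])
    then show "\<not> maximal_bound_path Qh (Lay i r, L)" using \<alpha> B(7) zc(1) by (intro not_max_I[of ?a]) auto
  next
    case nb0: True
    have g: "ng L \<le> 1" by (rule bound_ng2[OF b' nb0])
    define w where "w = strip L"
    define j where "j = ptgt Q (i, w)"
    have A: "is_path Q (i, w)" "ptgt Qh (Lay i r, L) = Lay j (r + ng L)" "ng L = 0 \<longrightarrow> L = cl r w"
      using lemA[OF PP nb0] unfolding w_def j_def by auto
    have jv: "j \<in> verts Q" unfolding j_def by (rule ptgt_in_verts[OF bqQ A(1)])
    show "\<not> maximal_bound_path Qh (Lay i r, L)"
    proof (cases "ng L = 1")
      case True
      have bW: "bound_path Q (i, strip L)" by (rule bound_g1_base[OF b' nb0 True])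
      have "plen (i, strip L) < m" using len le' True nb0 unfolding plen_def by simp
      then show ?thesis by (rule ext_G[OF PP nb0 g bW])
    next
      case False
      then have ng0: "ng L = 0" using g by simp
      have bW: "bound_path Q (i, w)" unfolding w_def by (rule bound_copy_base[OF b' nb0 ng0])
      have Lc: "L = cl r w" using A(3) ng0 by simp
      show ?thesis
      proof (cases "r \<le> m")
        case True
        obtain \<theta> where th: "\<forall>a\<in>ideal_of Q. ev \<theta> a = 0" "\<theta> (i, w) \<noteq> 0"
          using theta_exists[OF fin ngQ bW] by blast
        let ?a = "Gam j r"
        have P': "is_path Qh (Lay i r, ?a # L)" using PP jv True A(2) ng0 by (simp add: is_path_Cons)
        have "psiG 1 r \<theta> (Lay i r, ?a # L) \<noteq> 0" using th nb0 ng0 unfolding psiG_def w_def by simp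
        then have "bound_path Qh (Lay i r, ?a # L)" using bound_by_G[OF P' th(1), of 1 r] by simp
        then show ?thesis using jv True A(2) ng0 by (intro not_max_I[of ?a]) auto
      next
        case False
        then have rS: "r = Suc m" using iv by simp
        have lw: "plen (i, w) \<le> m" using bound_le[OF fin ngd bW] .
        show ?thesis
        proof (cases "plen (i, w) < m")
          case True
          then show ?thesis using ext_G[OF PP nb0 g] bW unfolding w_def by blast
        next
          case False
          then have wm: "plen (i, w) = m" using lw by simp
          have cs: "cspec Q M (i, w) (\<lambda>p. dualf Q m M p (i, w))" by (rule dualf_cspec[OF mb A(1) wm])
          obtain p where pM: "p \<in> M" and pnz: "dualf Q m M p (i, w) \<noteq> 0"
          proof (rule ccontr)
            assume "\<not> thesis"
            then have "\<forall>p\<in>M. dualf Q m M p (i, w) = 0" using that by blast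
            then have "lincomb M (\<lambda>p. dualf Q m M p (i, w)) = (\<lambda>_. 0)" by (rule lincomb_zero_on)
            then have "ebasis (i, w) \<in> ideal_of Q" using cs unfolding cspec_def by simp
            then show False using bW unfolding bound_path_def by simp
          qed
          have ends: "fst p = i" "ptgt Q p = ptgt Q (i, w)" using dualf_ends[OF mb bqQ pnz] by auto
          have pp: "is_path Q p" using Mpath[OF pM] by blast
          have tv: "ptgt Q p \<in> verts Q" by (rule ptgt_in_verts[OF bqQ pp])
          let ?a = "Beta (fst p) (snd p)"
          have aA: "?a \<in> arrs Qh" using pM by simp
          have P': "is_path Qh (Lay (ptgt Q p) 0, L @ [?a])"
          proof (rule is_path_appI)
            show "is_path Qh (Lay (ptgt Q p) 0, [?a])" using aA tv by (simp add: is_path_Cons)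
            show "is_path Qh (ptgt Qh (Lay (ptgt Q p) 0, [?a]), L)" using PP ends rS by simp
          qed
          have z0: "is_path Q (ptgt Q (i, w), [])" using ptgt_in_verts[OF bqQ A(1)] by simp
          have l: "L @ [?a] = cl (Suc m) w @ Beta (fst p) (snd p) # cl 0 []" using Lc rS by simp
          have "psiB Q m M (ptgt Q (i, w), []) (Lay (ptgt Q p) 0, L @ [?a]) = dualf Q m M p (i, w)"
            unfolding l psiB_list using ends by (simp add: dual_act_eq pcomp_simp) (metis prod.collapse)
          then have "psiB Q m M (ptgt Q (i, w), []) (Lay (ptgt Q p) 0, L @ [?a]) \<noteq> 0" using pnz by simp
          then have "bound_path Qh (Lay (ptgt Q p) 0, L @ [?a])" by (rule bound_by_B[OF P' z0])
          then show ?thesis using aA ends rS by (intro not_max_I[of ?a]) auto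
        qed
      qed
    qed
  qed
qed

lemma ml_graded: "m_nicely_graded (Suc m) Qh"
proof -
  have "plen P = Suc m" if "maximal_bound_path Qh P" for P
  proof -
    have b: "bound_path Qh P" using that unfolding maximal_bound_path_def by blast
    have "plen P \<le> Suc m" by (rule upper[OF b])
    moreover have "\<not> plen P \<le> m" using lower[OF b] that by blast
    ultimately show ?thesis by simp
  qed
  then show ?thesis unfolding m_nicely_graded_def properly_graded_def using ngQh by blast
qed

end


lemma multilayer_step:
  fixes Q :: "('v, 'a, 'k::field) uquiver"
  assumes "finite_bq Q" "m_nicely_graded m Q" "is_mbasis Q m M"
  shows "finite_bq (multilayer Q m M) \<and> m_nicely_graded (Suc m) (multilayer Q m M)"
proof -
  interpret mlq Q m M using assms by unfold_locales
  show ?thesis using finQh ml_graded by blast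
qed

theorem theorem5p6:
  fixes Q :: "('v, 'a, 'k::field) uquiver" and n :: nat
  assumes "finite_bq Q" and "m_nicely_graded n Q"
  shows "\<exists>Qs :: nat \<Rightarrow> ('v, 'a, 'k) uquiver. Qs 0 = Q \<and>
           (\<forall>t. nicely_graded (Qs t) \<and> is_multilayer_of (Qs t) (Qs (Suc t))
                \<and> m_nicely_graded (n + t) (Qs t))"
proof -
  define Mof where "Mof = (\<lambda>(P :: ('v, 'a, 'k) uquiver) (k::nat). SOME M. is_mbasis P k M)"
  define Qs where "Qs = rec_nat Q (\<lambda>t P. multilayer P (n + t) (Mof P (n + t)))"
  have Qs0: "Qs 0 = Q" by (simp add: Qs_def)
  have QsS: "Qs (Suc t) = multilayer (Qs t) (n + t) (Mof (Qs t) (n + t))" for t by (simp add: Qs_def)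
  have mbI: "is_mbasis P k (Mof P k)" if "finite_bq P" "m_nicely_graded k P" for P k
  proof -
    have "\<exists>M. is_mbasis P k M" by (rule mbasis_exists[OF that])
    then show ?thesis unfolding Mof_def by (rule someI_ex)
  qed
  have inv: "finite_bq (Qs t) \<and> m_nicely_graded (n + t) (Qs t)" for t
  proof (induction t)
    case 0 then show ?case using assms Qs0 by simp
  next
    case (Suc t)
    have mb: "is_mbasis (Qs t) (n + t) (Mof (Qs t) (n + t))" using mbI Suc.IH by blast
    have "finite_bq (multilayer (Qs t) (n + t) (Mof (Qs t) (n + t))) \<and>
          m_nicely_graded (Suc (n + t)) (multilayer (Qs t) (n + t) (Mof (Qs t) (n + t)))"
      using multilayer_step Suc.IH mb by blast
    then show ?case using QsS by simp
  qed
  have "nicely_graded (Qs t) \<and> is_multilayer_of (Qs t) (Qs (Suc t)) \<and> m_nicely_graded (n + t) (Qs t)" for t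
  proof -
    have mb: "is_mbasis (Qs t) (n + t) (Mof (Qs t) (n + t))" using mbI inv by blast
    have "is_multilayer_of (Qs t) (Qs (Suc t))"
      unfolding is_multilayer_of_def using inv mb QsS by blast
    then show ?thesis using inv unfolding m_nicely_graded_def by blast
  qed
  then show ?thesis using Qs0 by blast
qed

end
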